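(* Let $\mathcal{A}$ be an abelian category and $\xi\colon 0\to K\to X\xrightarrow{\alpha}Y\to 0$ a short exact sequence. The following are equivalent: (1) $\alpha$ is right minimal; (2) every endomorphism $u\colon K\to K$ with $[\xi]=[u.\xi]$ is an automorphism; (3) the connecting map $c(\xi,K)\colon\mathrm{Hom}_{\mathcal{A}}(K,K)\to\mathrm{Ext}^1_{\mathcal{A}}(Y,K)$ is a right minimal morphism of $\Gamma(K)$-modules.
   Context: A morphism $\alpha\colon X\to Y$ is right minimal if every endomorphism $u\colon X\to X$ with $\alpha=\alpha\circ u$ is an automorphism (same definition in any category, e.g. of modules). $u.\xi$ is the pushout of $\xi$ along $u$; $c(\xi,K)$ sends $u$ to $[u.\xi]$. $\Gamma(K)=\mathrm{End}_{\mathcal{A}}(K)$. *)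

theory Defs
  imports Main
begin

text \<open>A preadditive category presented by carrier sets: objects, arrows,
 domain/codomain, composition (Comp g f = g after f), identities, addition of
 parallel arrows and zero arrows Zero a b : a -> b.\<close>

record ('o,'m) acat =
  Obj  :: "'o set"
  Arr  :: "'m set"
  Dom  :: "'m \<Rightarrow> 'o"
  Cod  :: "'m \<Rightarrow> 'o"
  Comp :: "'m \<Rightarrow> 'm \<Rightarrow> 'm"
  Ident :: "'o \<Rightarrow> 'm"
  Add  :: "'m \<Rightarrow> 'm \<Rightarrow> 'm"
  Zero :: "'o \<Rightarrow> 'o \<Rightarrow> 'm"

definition hom :: "('o,'m) acat \<Rightarrow> 'o \<Rightarrow> 'o \<Rightarrow> 'm set" where
  "hom C a b = {f \<in> Arr C. Dom C f = a \<and> Cod C f = b}"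

definition category :: "('o,'m) acat \<Rightarrow> bool" where
  "category C \<longleftrightarrow>
     (\<forall>f\<in>Arr C. Dom C f \<in> Obj C \<and> Cod C f \<in> Obj C) \<and>
     (\<forall>a\<in>Obj C. Ident C a \<in> hom C a a) \<and>
     (\<forall>a\<in>Obj C. \<forall>b\<in>Obj C. \<forall>c\<in>Obj C. \<forall>f\<in>hom C a b. \<forall>g\<in>hom C b c.
         Comp C g f \<in> hom C a c) \<and>
     (\<forall>a\<in>Obj C. \<forall>b\<in>Obj C. \<forall>c\<in>Obj C. \<forall>d\<in>Obj C.
        \<forall>f\<in>hom C a b. \<forall>g\<in>hom C b c. \<forall>h\<in>hom C c d.
         Comp C h (Comp C g f) = Comp C (Comp C h g) f) \<and>
     (\<forall>f\<in>Arr C. Comp C (Ident C (Cod C f)) f = f \<and> Comp C f (Ident C (Dom C f)) = f)"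

definition preadditive :: "('o,'m) acat \<Rightarrow> bool" where
  "preadditive C \<longleftrightarrow> category C \<and>
     (\<forall>a\<in>Obj C. \<forall>b\<in>Obj C.
        Zero C a b \<in> hom C a b \<and>
        (\<forall>f\<in>hom C a b. \<forall>g\<in>hom C a b. Add C f g \<in> hom C a b \<and> Add C f g = Add C g f) \<and>
        (\<forall>f\<in>hom C a b. \<forall>g\<in>hom C a b. \<forall>h\<in>hom C a b. Add C (Add C f g) h = Add C f (Add C g h)) \<and>
        (\<forall>f\<in>hom C a b. Add C f (Zero C a b) = f) \<and>
        (\<forall>f\<in>hom C a b. \<exists>g\<in>hom C a b. Add C f g = Zero C a b)) \<and>
     (\<forall>a\<in>Obj C. \<forall>b\<in>Obj C. \<forall>c\<in>Obj C.
        (\<forall>f\<in>hom C a b. \<forall>f'\<in>hom C a b. \<forall>g\<in>hom C b c.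
           Comp C g (Add C f f') = Add C (Comp C g f) (Comp C g f')) \<and>
        (\<forall>f\<in>hom C a b. \<forall>g\<in>hom C b c. \<forall>g'\<in>hom C b c.
           Comp C (Add C g g') f = Add C (Comp C g f) (Comp C g' f)))"

definition zero_object :: "('o,'m) acat \<Rightarrow> 'o \<Rightarrow> bool" where
  "zero_object C z \<longleftrightarrow> z \<in> Obj C \<and>
     (\<forall>a\<in>Obj C. (\<exists>!f. f \<in> hom C z a) \<and> (\<exists>!f. f \<in> hom C a z))"

definition is_biproduct ::
  "('o,'m) acat \<Rightarrow> 'o \<Rightarrow> 'o \<Rightarrow> 'o \<Rightarrow> 'm \<Rightarrow> 'm \<Rightarrow> 'm \<Rightarrow> 'm \<Rightarrow> bool" where
  "is_biproduct C a b p i1 i2 p1 p2 \<longleftrightarrow> p \<in> Obj C \<and>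
     i1 \<in> hom C a p \<and> i2 \<in> hom C b p \<and> p1 \<in> hom C p a \<and> p2 \<in> hom C p b \<and>
     Comp C p1 i1 = Ident C a \<and> Comp C p2 i2 = Ident C b \<and>
     Comp C p1 i2 = Zero C b a \<and> Comp C p2 i1 = Zero C a b \<and>
     Add C (Comp C i1 p1) (Comp C i2 p2) = Ident C p"

definition is_kernel :: "('o,'m) acat \<Rightarrow> 'm \<Rightarrow> 'm \<Rightarrow> bool" where
  "is_kernel C k f \<longleftrightarrow> f \<in> Arr C \<and> k \<in> Arr C \<and> Cod C k = Dom C f \<and>
     Comp C f k = Zero C (Dom C k) (Cod C f) \<and>
     (\<forall>t\<in>Obj C. \<forall>g\<in>hom C t (Dom C f). Comp C f g = Zero C t (Cod C f) \<longrightarrow>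
        (\<exists>!h. h \<in> hom C t (Dom C k) \<and> Comp C k h = g))"

definition is_cokernel :: "('o,'m) acat \<Rightarrow> 'm \<Rightarrow> 'm \<Rightarrow> bool" where
  "is_cokernel C q f \<longleftrightarrow> f \<in> Arr C \<and> q \<in> Arr C \<and> Dom C q = Cod C f \<and>
     Comp C q f = Zero C (Dom C f) (Cod C q) \<and>
     (\<forall>t\<in>Obj C. \<forall>g\<in>hom C (Cod C f) t. Comp C g f = Zero C (Dom C f) t \<longrightarrow>
        (\<exists>!h. h \<in> hom C (Cod C q) t \<and> Comp C h q = g))"

definition mono :: "('o,'m) acat \<Rightarrow> 'm \<Rightarrow> bool" where
  "mono C f \<longleftrightarrow> f \<in> Arr C \<and>
     (\<forall>t\<in>Obj C. \<forall>g\<in>hom C t (Dom C f). \<forall>h\<in>hom C t (Dom C f).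
        Comp C f g = Comp C f h \<longrightarrow> g = h)"

definition epi :: "('o,'m) acat \<Rightarrow> 'm \<Rightarrow> bool" where
  "epi C f \<longleftrightarrow> f \<in> Arr C \<and>
     (\<forall>t\<in>Obj C. \<forall>g\<in>hom C (Cod C f) t. \<forall>h\<in>hom C (Cod C f) t.
        Comp C g f = Comp C h f \<longrightarrow> g = h)"

definition abelian :: "('o,'m) acat \<Rightarrow> bool" where
  "abelian C \<longleftrightarrow> preadditive C \<and>
     (\<exists>z. zero_object C z) \<and>
     (\<forall>a\<in>Obj C. \<forall>b\<in>Obj C. \<exists>p i1 i2 p1 p2. is_biproduct C a b p i1 i2 p1 p2) \<and>
     (\<forall>f\<in>Arr C. \<exists>k. is_kernel C k f) \<and>
     (\<forall>f\<in>Arr C. \<exists>q. is_cokernel C q f) \<and>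
     (\<forall>f. mono C f \<longrightarrow> (\<exists>g. is_kernel C f g)) \<and>
     (\<forall>f. epi C f \<longrightarrow> (\<exists>g. is_cokernel C f g))"

definition iso :: "('o,'m) acat \<Rightarrow> 'm \<Rightarrow> bool" where
  "iso C f \<longleftrightarrow> f \<in> Arr C \<and>
     (\<exists>g\<in>hom C (Cod C f) (Dom C f).
        Comp C g f = Ident C (Dom C f) \<and> Comp C f g = Ident C (Cod C f))"

definition right_minimal :: "('o,'m) acat \<Rightarrow> 'm \<Rightarrow> bool" where
  "right_minimal C \<alpha> \<longleftrightarrow> \<alpha> \<in> Arr C \<and>
     (\<forall>u\<in>hom C (Dom C \<alpha>) (Dom C \<alpha>). Comp C \<alpha> u = \<alpha> \<longrightarrow> iso C u)"

text \<open>Short exact sequence 0 -> K -> X -> Y -> 0, given by the pair (i, alpha):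
 i is a kernel of alpha and alpha is a cokernel of i.\<close>
definition ses :: "('o,'m) acat \<Rightarrow> 'm \<times> 'm \<Rightarrow> bool" where
  "ses C \<xi> \<longleftrightarrow> (case \<xi> of (i, \<alpha>) \<Rightarrow> is_kernel C i \<alpha> \<and> is_cokernel C \<alpha> i)"

definition ker_obj :: "('o,'m) acat \<Rightarrow> 'm \<times> 'm \<Rightarrow> 'o" where
  "ker_obj C \<xi> = Dom C (fst \<xi>)"

definition end_obj :: "('o,'m) acat \<Rightarrow> 'm \<times> 'm \<Rightarrow> 'o" where
  "end_obj C \<xi> = Cod C (snd \<xi>)"

text \<open>Equivalence of extensions of Y by K (Yoneda): a morphism of short exact
 sequences which is the identity on K and on Y.\<close>
definition ext_equiv :: "('o,'m) acat \<Rightarrow> 'm \<times> 'm \<Rightarrow> 'm \<times> 'm \<Rightarrow> bool" where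
  "ext_equiv C \<xi> \<eta> \<longleftrightarrow> ses C \<xi> \<and> ses C \<eta> \<and>
     ker_obj C \<xi> = ker_obj C \<eta> \<and> end_obj C \<xi> = end_obj C \<eta> \<and>
     (\<exists>f\<in>hom C (Cod C (fst \<xi>)) (Cod C (fst \<eta>)).
        Comp C f (fst \<xi>) = fst \<eta> \<and> Comp C (snd \<eta>) f = snd \<xi>)"

definition ext_class :: "('o,'m) acat \<Rightarrow> 'm \<times> 'm \<Rightarrow> ('m \<times> 'm) set" where
  "ext_class C \<xi> = {\<eta>. ext_equiv C \<xi> \<eta>}"

definition is_pushout :: "('o,'m) acat \<Rightarrow> 'm \<Rightarrow> 'm \<Rightarrow> 'm \<Rightarrow> 'm \<Rightarrow> bool" where
  "is_pushout C i u f j \<longleftrightarrow> i \<in> Arr C \<and> u \<in> Arr C \<and> f \<in> Arr C \<and> j \<in> Arr C \<and>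
     Dom C i = Dom C u \<and> Dom C f = Cod C i \<and> Dom C j = Cod C u \<and> Cod C f = Cod C j \<and>
     Comp C f i = Comp C j u \<and>
     (\<forall>t\<in>Obj C. \<forall>g\<in>hom C (Cod C i) t. \<forall>h\<in>hom C (Cod C u) t.
        Comp C g i = Comp C h u \<longrightarrow>
        (\<exists>!p. p \<in> hom C (Cod C f) t \<and> Comp C p f = g \<and> Comp C p j = h))"

text \<open>eta is a (representative of the) pushout u.xi of xi along u : K -> K':
 eta = (j, beta) where (f, j) is a pushout of (i, u) and beta is the induced map
 with beta f = alpha and beta j = 0.\<close>
definition pushout_ext :: "('o,'m) acat \<Rightarrow> 'm \<Rightarrow> 'm \<times> 'm \<Rightarrow> 'm \<times> 'm \<Rightarrow> bool" where
  "pushout_ext C u \<xi> \<eta> \<longleftrightarrow>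
     (\<exists>f. is_pushout C (fst \<xi>) u f (fst \<eta>) \<and>
          snd \<eta> \<in> hom C (Cod C f) (Cod C (snd \<xi>)) \<and>
          Comp C (snd \<eta>) f = snd \<xi> \<and>
          Comp C (snd \<eta>) (fst \<eta>) = Zero C (Cod C u) (Cod C (snd \<xi>)))"

definition conn :: "('o,'m) acat \<Rightarrow> 'm \<times> 'm \<Rightarrow> 'm \<Rightarrow> ('m \<times> 'm) set" where
  "conn C \<xi> u = ext_class C (SOME \<eta>. pushout_ext C u \<xi> \<eta>)"

text \<open>Gamma(K)-linear endomorphisms of Hom(K,K), where Gamma(K) = End(K) acts on
 Hom(K,K) by composition (the module structure for which c(xi,K) is linear,
 since (gamma w).xi = gamma.(w.xi)).\<close>
definition Gamma_linear_endo :: "('o,'m) acat \<Rightarrow> 'o \<Rightarrow> ('m \<Rightarrow> 'm) \<Rightarrow> bool" where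
  "Gamma_linear_endo C K \<phi> \<longleftrightarrow>
     (\<forall>w\<in>hom C K K. \<phi> w \<in> hom C K K) \<and>
     (\<forall>w\<in>hom C K K. \<forall>w'\<in>hom C K K. \<phi> (Add C w w') = Add C (\<phi> w) (\<phi> w')) \<and>
     (\<forall>\<gamma>\<in>hom C K K. \<forall>w\<in>hom C K K. \<phi> (Comp C \<gamma> w) = Comp C \<gamma> (\<phi> w))"

definition conn_right_minimal :: "('o,'m) acat \<Rightarrow> 'm \<times> 'm \<Rightarrow> bool" where
  "conn_right_minimal C \<xi> \<longleftrightarrow>
     (\<forall>\<phi>. Gamma_linear_endo C (ker_obj C \<xi>) \<phi> \<and>
          (\<forall>w\<in>hom C (ker_obj C \<xi>) (ker_obj C \<xi>). conn C \<xi> (\<phi> w) = conn C \<xi> w) \<longrightarrow>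
          bij_betw \<phi> (hom C (ker_obj C \<xi>) (ker_obj C \<xi>)) (hom C (ker_obj C \<xi>) (ker_obj C \<xi>)))"

end

theory Submission
  imports Defs
begin

locale ab = fixes C :: "('o,'m) acat" assumes abel: "abelian C"
begin

abbreviation cmp (infixr "\<cdot>" 70) where "g \<cdot> f \<equiv> Comp C g f"
abbreviation pls (infixl "\<oplus>" 65) where "f \<oplus> g \<equiv> Add C f g"

lemma pre: "preadditive C" using abel unfolding abelian_def by blast
lemma cat: "category C" using pre unfolding preadditive_def by blast

lemma hom_objs: "f \<in> hom C a b \<Longrightarrow> a \<in> Obj C \<and> b \<in> Obj C"
  using cat unfolding category_def hom_def by blast
lemma homD: "f \<in> hom C a b \<Longrightarrow> f \<in> Arr C \<and> Dom C f = a \<and> Cod C f = b"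
  unfolding hom_def by blast
lemma homI: "f \<in> Arr C \<Longrightarrow> f \<in> hom C (Dom C f) (Cod C f)"
  unfolding hom_def by blast
lemma comp_hom[intro]: "f \<in> hom C a b \<Longrightarrow> g \<in> hom C b c \<Longrightarrow> g \<cdot> f \<in> hom C a c"
  using cat hom_objs[of f a b] hom_objs[of g b c] unfolding category_def by blast
lemma assoc: "f \<in> hom C a b \<Longrightarrow> g \<in> hom C b c \<Longrightarrow> h \<in> hom C c d \<Longrightarrow> h \<cdot> (g \<cdot> f) = (h \<cdot> g) \<cdot> f"
  using cat hom_objs[of f a b] hom_objs[of h c d] hom_objs[of g b c] unfolding category_def by blast
lemma id_hom[intro]: "a \<in> Obj C \<Longrightarrow> Ident C a \<in> hom C a a"
  using cat unfolding category_def by blast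
lemma id_l: "f \<in> hom C a b \<Longrightarrow> Ident C b \<cdot> f = f"
  using cat unfolding category_def hom_def by blast
lemma id_r: "f \<in> hom C a b \<Longrightarrow> f \<cdot> Ident C a = f"
  using cat unfolding category_def hom_def by blast
lemma zero_hom[intro]: "a \<in> Obj C \<Longrightarrow> b \<in> Obj C \<Longrightarrow> Zero C a b \<in> hom C a b"
  using pre unfolding preadditive_def by blast
lemma add_hom[intro]: "f \<in> hom C a b \<Longrightarrow> g \<in> hom C a b \<Longrightarrow> f \<oplus> g \<in> hom C a b"
  using pre hom_objs[of f a b] unfolding preadditive_def by blast
lemma add_comm: "f \<in> hom C a b \<Longrightarrow> g \<in> hom C a b \<Longrightarrow> f \<oplus> g = g \<oplus> f"
  using pre hom_objs[of f a b] unfolding preadditive_def by blast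
lemma add_assoc: "f \<in> hom C a b \<Longrightarrow> g \<in> hom C a b \<Longrightarrow> h \<in> hom C a b \<Longrightarrow> (f \<oplus> g) \<oplus> h = f \<oplus> (g \<oplus> h)"
  using pre hom_objs[of f a b] unfolding preadditive_def by blast
lemma add_zero: "f \<in> hom C a b \<Longrightarrow> f \<oplus> Zero C a b = f"
  using pre hom_objs[of f a b] unfolding preadditive_def by blast
lemma zero_add: assumes "f \<in> hom C a b" shows "Zero C a b \<oplus> f = f"
proof -
  have z: "Zero C a b \<in> hom C a b" using assms hom_objs zero_hom by blast
  have "Zero C a b \<oplus> f = f \<oplus> Zero C a b" using add_comm[OF z assms] .
  also have "\<dots> = f" using add_zero[OF assms] .
  finally show ?thesis .
qed
lemma neg_ex: "f \<in> hom C a b \<Longrightarrow> \<exists>g\<in>hom C a b. f \<oplus> g = Zero C a b"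
  using pre hom_objs[of f a b] unfolding preadditive_def by blast
lemma distl: "f \<in> hom C a b \<Longrightarrow> f' \<in> hom C a b \<Longrightarrow> g \<in> hom C b c \<Longrightarrow> g \<cdot> (f \<oplus> f') = g \<cdot> f \<oplus> g \<cdot> f'"
  using pre hom_objs[of f a b] hom_objs[of g b c] unfolding preadditive_def by blast
lemma distr: "f \<in> hom C a b \<Longrightarrow> g \<in> hom C b c \<Longrightarrow> g' \<in> hom C b c \<Longrightarrow> (g \<oplus> g') \<cdot> f = g \<cdot> f \<oplus> g' \<cdot> f"
  using pre hom_objs[of f a b] hom_objs[of g b c] unfolding preadditive_def by blast

lemma cancel: assumes "f \<in> hom C a b" "g \<in> hom C a b" "g' \<in> hom C a b" "f \<oplus> g = f \<oplus> g'"
  shows "g = g'"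
proof -
  obtain n where n: "n \<in> hom C a b" "f \<oplus> n = Zero C a b" using neg_ex assms by blast
  have nf: "n \<oplus> f = Zero C a b" using n add_comm assms by simp
  have "g = Zero C a b \<oplus> g" using zero_add[OF assms(2)] by simp
  also have "\<dots> = (n \<oplus> f) \<oplus> g" using nf by simp
  also have "\<dots> = n \<oplus> (f \<oplus> g)" using add_assoc n assms by blast
  also have "\<dots> = n \<oplus> (f \<oplus> g')" using assms by simp
  also have "\<dots> = (n \<oplus> f) \<oplus> g'" using add_assoc n assms by simp
  also have "\<dots> = g'" using nf zero_add[OF assms(3)] by simp
  finally show ?thesis .
qed

lemma idem_zero: assumes "x \<in> hom C a b" "x \<oplus> x = x" shows "x = Zero C a b"
proof (rule cancel[of x a b])
  show "Zero C a b \<in> hom C a b" using assms hom_objs by blast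
  show "x \<oplus> x = x \<oplus> Zero C a b" using assms add_zero by simp
qed (use assms in auto)

lemma comp_zero: assumes "f \<in> hom C a b" "c \<in> Obj C" shows "Zero C b c \<cdot> f = Zero C a c"
proof -
  have z: "Zero C b c \<in> hom C b c" using assms hom_objs by blast
  have "Zero C b c \<cdot> f = (Zero C b c \<oplus> Zero C b c) \<cdot> f" using add_zero z by simp
  also have "\<dots> = Zero C b c \<cdot> f \<oplus> Zero C b c \<cdot> f" using distr assms z by blast
  finally show ?thesis using idem_zero[of "Zero C b c \<cdot> f" a c] z assms by auto
qed

lemma zero_comp: assumes "f \<in> hom C b c" "a \<in> Obj C" shows "f \<cdot> Zero C a b = Zero C a c"
proof -
  have z: "Zero C a b \<in> hom C a b" using assms hom_objs by blast
  have "f \<cdot> Zero C a b = f \<cdot> (Zero C a b \<oplus> Zero C a b)" using add_zero z by simp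
  also have "\<dots> = f \<cdot> Zero C a b \<oplus> f \<cdot> Zero C a b" using distl assms z by blast
  finally show ?thesis using idem_zero[of "f \<cdot> Zero C a b" a c] z assms by auto
qed

definition neg where "neg a b f = (SOME g. g \<in> hom C a b \<and> f \<oplus> g = Zero C a b)"

lemma neg: assumes "f \<in> hom C a b" shows "neg a b f \<in> hom C a b \<and> f \<oplus> neg a b f = Zero C a b"
proof -
  have "\<exists>g. g \<in> hom C a b \<and> f \<oplus> g = Zero C a b" using neg_ex[OF assms] by blast
  then show ?thesis unfolding neg_def by (rule someI_ex)
qed

lemma neg_unique: assumes "f \<in> hom C a b" "g \<in> hom C a b" "f \<oplus> g = Zero C a b" shows "g = neg a b f"
  using neg[OF assms(1)] assms cancel[of f a b g "neg a b f"] by simp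

lemma comp_neg: assumes "f \<in> hom C a b" "h \<in> hom C b c" shows "h \<cdot> neg a b f = neg a c (h \<cdot> f)"
proof -
  have n: "neg a b f \<in> hom C a b" "f \<oplus> neg a b f = Zero C a b" using neg[OF assms(1)] by auto
  have "h \<cdot> f \<oplus> h \<cdot> neg a b f = h \<cdot> Zero C a b" using distl[OF assms(1) n(1) assms(2)] n(2) by simp
  also have "\<dots> = Zero C a c" using zero_comp assms hom_objs by blast
  finally show ?thesis using neg_unique[of "h \<cdot> f" a c "h \<cdot> neg a b f"] n assms comp_hom by blast
qed

lemma neg_comp: assumes "f \<in> hom C a b" "h \<in> hom C c a" shows "neg a b f \<cdot> h = neg c b (f \<cdot> h)"
proof -
  have n: "neg a b f \<in> hom C a b" "f \<oplus> neg a b f = Zero C a b" using neg[OF assms(1)] by auto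
  have "f \<cdot> h \<oplus> neg a b f \<cdot> h = Zero C a b \<cdot> h" using distr[OF assms(2) assms(1) n(1)] n(2) by simp
  also have "\<dots> = Zero C c b" using comp_zero assms hom_objs by blast
  finally show ?thesis using neg_unique[of "f \<cdot> h" c b "neg a b f \<cdot> h"] n assms comp_hom by blast
qed

lemma diff_zero: assumes "f \<in> hom C a b" "g \<in> hom C a b" "f \<oplus> neg a b g = Zero C a b" shows "f = g"
proof -
  have n: "neg a b g \<in> hom C a b" "g \<oplus> neg a b g = Zero C a b" using neg[OF assms(2)] by auto
  have "neg a b g \<oplus> f = neg a b g \<oplus> g" using add_comm[OF n(1) assms(1)] add_comm[OF n(1) assms(2)] assms(3) n(2) by simp
  thus ?thesis using cancel[OF n(1) assms(1) assms(2)] by blast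
qed

lemma mono_by_zero: assumes "f \<in> hom C a b"
  and z: "\<And>t g. t \<in> Obj C \<Longrightarrow> g \<in> hom C t a \<Longrightarrow> f \<cdot> g = Zero C t b \<Longrightarrow> g = Zero C t a"
  shows "mono C f"
  unfolding mono_def
proof (intro conjI ballI impI)
  show "f \<in> Arr C" using assms homD by blast
  fix t g h assume t: "t \<in> Obj C" and g: "g \<in> hom C t (Dom C f)" and h: "h \<in> hom C t (Dom C f)"
    and e: "f \<cdot> g = f \<cdot> h"
  have g': "g \<in> hom C t a" and h': "h \<in> hom C t a" using g h assms homD by auto
  have "f \<cdot> (g \<oplus> neg t a h) = f \<cdot> g \<oplus> f \<cdot> neg t a h" using distl g' h' neg assms by blast
  also have "\<dots> = f \<cdot> h \<oplus> neg t b (f \<cdot> h)" using e comp_neg[OF h' assms(1)] by simp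
  also have "\<dots> = Zero C t b" using neg comp_hom h' assms by blast
  finally have "g \<oplus> neg t a h = Zero C t a" using z t g' h' neg by blast
  thus "g = h" using diff_zero g' h' by blast
qed

lemma epi_by_zero: assumes "f \<in> hom C a b"
  and z: "\<And>t g. t \<in> Obj C \<Longrightarrow> g \<in> hom C b t \<Longrightarrow> g \<cdot> f = Zero C a t \<Longrightarrow> g = Zero C b t"
  shows "epi C f"
  unfolding epi_def
proof (intro conjI ballI impI)
  show "f \<in> Arr C" using assms homD by blast
  fix t g h assume t: "t \<in> Obj C" and g: "g \<in> hom C (Cod C f) t" and h: "h \<in> hom C (Cod C f) t"
    and e: "g \<cdot> f = h \<cdot> f"
  have g': "g \<in> hom C b t" and h': "h \<in> hom C b t" using g h assms homD by auto
  have "(g \<oplus> neg b t h) \<cdot> f = g \<cdot> f \<oplus> neg b t h \<cdot> f" using distr g' h' neg assms by blast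
  also have "\<dots> = h \<cdot> f \<oplus> neg a t (h \<cdot> f)" using e neg_comp[OF h' assms(1)] by simp
  also have "\<dots> = Zero C a t" using neg comp_hom h' assms by blast
  finally have "g \<oplus> neg b t h = Zero C b t" using z t g' h' neg by blast
  thus "g = h" using diff_zero g' h' by blast
qed

lemma mono_cancel: "mono C f \<Longrightarrow> f \<in> hom C a b \<Longrightarrow> g \<in> hom C t a \<Longrightarrow> h \<in> hom C t a \<Longrightarrow> f \<cdot> g = f \<cdot> h \<Longrightarrow> g = h"
  unfolding mono_def using homD[of f a b] hom_objs[of g t a] by blast
lemma epi_cancel: "epi C f \<Longrightarrow> f \<in> hom C a b \<Longrightarrow> g \<in> hom C b t \<Longrightarrow> h \<in> hom C b t \<Longrightarrow> g \<cdot> f = h \<cdot> f \<Longrightarrow> g = h"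
  unfolding epi_def using homD[of f a b] hom_objs[of g b t] by blast


lemma kerD: assumes "is_kernel C k f"
  shows "k \<in> hom C (Dom C k) (Dom C f)" "f \<in> hom C (Dom C f) (Cod C f)"
    "f \<cdot> k = Zero C (Dom C k) (Cod C f)"
proof -
  have "f \<in> Arr C \<and> k \<in> Arr C \<and> Cod C k = Dom C f \<and> f \<cdot> k = Zero C (Dom C k) (Cod C f)"
    apply (insert assms) apply (unfold is_kernel_def) apply (elim conjE) apply (intro conjI) apply assumption+ done
  then show "k \<in> hom C (Dom C k) (Dom C f)" "f \<in> hom C (Dom C f) (Cod C f)"
    "f \<cdot> k = Zero C (Dom C k) (Cod C f)" unfolding hom_def by simp_all
qed

lemma ker_univ: assumes "is_kernel C k f" "t \<in> Obj C" "g \<in> hom C t (Dom C f)" "f \<cdot> g = Zero C t (Cod C f)"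
  shows "\<exists>!h. h \<in> hom C t (Dom C k) \<and> k \<cdot> h = g"
proof -
  from assms(1) have H: "\<forall>t\<in>Obj C. \<forall>g\<in>hom C t (Dom C f). f \<cdot> g = Zero C t (Cod C f) \<longrightarrow>
        (\<exists>!h. h \<in> hom C t (Dom C k) \<and> k \<cdot> h = g)" unfolding is_kernel_def by (elim conjE) assumption
  show ?thesis by (rule mp[OF bspec[OF bspec[OF H assms(2)] assms(3)] assms(4)])
qed

lemma ex1_uniq: "\<exists>!x. P x \<Longrightarrow> P a \<Longrightarrow> P b \<Longrightarrow> a = b" by blast

lemma ker_factor: assumes "is_kernel C k f" "g \<in> hom C t (Dom C f)" "f \<cdot> g = Zero C t (Cod C f)"
  shows "\<exists>h\<in>hom C t (Dom C k). k \<cdot> h = g"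
proof -
  have "\<exists>!h. h \<in> hom C t (Dom C k) \<and> k \<cdot> h = g" using ker_univ[OF assms(1) _ assms(2,3)] hom_objs[OF assms(2)] by blast
  then show ?thesis by blast
qed

lemma cokerD: assumes "is_cokernel C q f"
  shows "q \<in> hom C (Cod C f) (Cod C q)" "f \<in> hom C (Dom C f) (Cod C f)"
    "q \<cdot> f = Zero C (Dom C f) (Cod C q)"
proof -
  have "f \<in> Arr C \<and> q \<in> Arr C \<and> Dom C q = Cod C f \<and> q \<cdot> f = Zero C (Dom C f) (Cod C q)"
    apply (insert assms) apply (unfold is_cokernel_def) apply (elim conjE) apply (intro conjI) apply assumption+ done
  then show "q \<in> hom C (Cod C f) (Cod C q)" "f \<in> hom C (Dom C f) (Cod C f)"
    "q \<cdot> f = Zero C (Dom C f) (Cod C q)" unfolding hom_def by simp_all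
qed

lemma coker_univ: assumes "is_cokernel C q f" "t \<in> Obj C" "g \<in> hom C (Cod C f) t" "g \<cdot> f = Zero C (Dom C f) t"
  shows "\<exists>!h. h \<in> hom C (Cod C q) t \<and> h \<cdot> q = g"
proof -
  from assms(1) have H: "\<forall>t\<in>Obj C. \<forall>g\<in>hom C (Cod C f) t. g \<cdot> f = Zero C (Dom C f) t \<longrightarrow>
        (\<exists>!h. h \<in> hom C (Cod C q) t \<and> h \<cdot> q = g)" unfolding is_cokernel_def by (elim conjE) assumption
  show ?thesis by (rule mp[OF bspec[OF bspec[OF H assms(2)] assms(3)] assms(4)])
qed

lemma coker_factor: assumes "is_cokernel C q f" "g \<in> hom C (Cod C f) t" "g \<cdot> f = Zero C (Dom C f) t"
  shows "\<exists>h\<in>hom C (Cod C q) t. h \<cdot> q = g"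
proof -
  have "\<exists>!h. h \<in> hom C (Cod C q) t \<and> h \<cdot> q = g" using coker_univ[OF assms(1) _ assms(2,3)] hom_objs[OF assms(2)] by blast
  then show ?thesis by blast
qed

lemma ker_mono: assumes "is_kernel C k f" shows "mono C k"
  unfolding mono_def
proof (intro conjI ballI impI)
  note kd = kerD[OF assms]
  show "k \<in> Arr C" using homD[OF kd(1)] by simp
  fix t g h assume t: "t \<in> Obj C" and g: "g \<in> hom C t (Dom C k)" and h: "h \<in> hom C t (Dom C k)"
    and e: "k \<cdot> g = k \<cdot> h"
  have x: "k \<cdot> g \<in> hom C t (Dom C f)" using g kd by blast
  have "f \<cdot> (k \<cdot> g) = (f \<cdot> k) \<cdot> g" using assoc[OF g kd(1) kd(2)] .
  also have "\<dots> = Zero C t (Cod C f)" using kd(3) comp_zero[OF g] hom_objs[OF kd(2)] by simp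
  finally have z: "f \<cdot> (k \<cdot> g) = Zero C t (Cod C f)" .
  show "g = h" by (rule ex1_uniq[OF ker_univ[OF assms t x z]]) (use g h e in simp_all)
qed

lemma coker_epi: assumes "is_cokernel C q f" shows "epi C q"
  unfolding epi_def
proof (intro conjI ballI impI)
  note kd = cokerD[OF assms]
  show "q \<in> Arr C" using homD[OF kd(1)] by simp
  fix t g h assume t: "t \<in> Obj C" and g: "g \<in> hom C (Cod C q) t" and h: "h \<in> hom C (Cod C q) t"
    and e: "g \<cdot> q = h \<cdot> q"
  have x: "g \<cdot> q \<in> hom C (Cod C f) t" using g kd by blast
  have "(g \<cdot> q) \<cdot> f = g \<cdot> (q \<cdot> f)" using assoc[OF kd(2) kd(1) g] by simp
  also have "\<dots> = Zero C (Dom C f) t" using kd(3) zero_comp[OF g] hom_objs[OF kd(2)] by simp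
  finally have z: "(g \<cdot> q) \<cdot> f = Zero C (Dom C f) t" .
  show "g = h" by (rule ex1_uniq[OF coker_univ[OF assms t x z]]) (use g h e in simp_all)
qed

lemma isoI: assumes "u \<in> hom C a b" "v \<in> hom C b a" "v \<cdot> u = Ident C a" "u \<cdot> v = Ident C b" shows "iso C u"
proof -
  have "u \<in> Arr C" "Dom C u = a" "Cod C u = b" using homD[OF assms(1)] by auto
  then show ?thesis unfolding iso_def using assms by auto
qed

lemma isoD: assumes "iso C u" "u \<in> hom C a b" shows "\<exists>v\<in>hom C b a. v \<cdot> u = Ident C a \<and> u \<cdot> v = Ident C b"
proof -
  have "Dom C u = a" "Cod C u = b" using homD[OF assms(2)] by auto
  then show ?thesis using assms(1) unfolding iso_def by auto
qed

lemma mono_is_ker: "mono C f \<Longrightarrow> \<exists>g. is_kernel C f g"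
  apply (insert abel) apply (unfold abelian_def) apply (elim conjE) apply blast done
lemma ker_ex: "f \<in> Arr C \<Longrightarrow> \<exists>k. is_kernel C k f"
  apply (insert abel) apply (unfold abelian_def) apply (elim conjE) apply blast done
lemma coker_ex: "f \<in> Arr C \<Longrightarrow> \<exists>q. is_cokernel C q f"
  apply (insert abel) apply (unfold abelian_def) apply (elim conjE) apply blast done
lemma bip_ex: "a \<in> Obj C \<Longrightarrow> b \<in> Obj C \<Longrightarrow> \<exists>p i1 i2 p1 p2. is_biproduct C a b p i1 i2 p1 p2"
  apply (insert abel) apply (unfold abelian_def) apply (elim conjE) apply blast done

lemma mono_epi_iso: assumes m: "mono C h" and e: "epi C h" and h: "h \<in> hom C a b" shows "iso C h"
proof -
  obtain g where g: "is_kernel C h g" using mono_is_ker[OF m] by blast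
  note gd = kerD[OF g]
  have Dg: "Dom C g = b" using homD[OF gd(1)] homD[OF h] by simp
  have Dh: "Dom C h = a" using homD[OF h] by simp
  let ?c = "Cod C g"
  have gh: "g \<in> hom C b ?c" using gd(2) Dg by simp
  have c: "?c \<in> Obj C" and ao: "a \<in> Obj C" and bo: "b \<in> Obj C" using hom_objs[OF gh] hom_objs[OF h] by auto
  have "g \<cdot> h = Zero C b ?c \<cdot> h" using gd(3) Dh comp_zero[OF h c] by simp
  hence g0: "g = Zero C b ?c" using epi_cancel[OF e h gh zero_hom[OF bo c]] by simp
  have ib: "Ident C b \<in> hom C b (Dom C g)" using Dg id_hom[OF bo] by simp
  have "g \<cdot> Ident C b = Zero C b ?c" using id_r[OF gh] g0 by simp
  then obtain k where k: "k \<in> hom C b a" "h \<cdot> k = Ident C b" using ker_factor[OF g ib] Dh by auto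
  have "h \<cdot> (k \<cdot> h) = (h \<cdot> k) \<cdot> h" using assoc[OF h k(1) h] .
  also have "\<dots> = h \<cdot> Ident C a" using k(2) id_l[OF h] id_r[OF h] by simp
  finally have "k \<cdot> h = Ident C a"
    using mono_cancel[OF m h comp_hom[OF h k(1)] id_hom[OF ao]] by simp
  then show ?thesis by (rule isoI[OF h k(1) _ k(2)])
qed

lemma mono_coker_ker: assumes m: "mono C m" and q: "is_cokernel C q m" shows "is_kernel C m q"
proof -
  obtain g where g: "is_kernel C m g" using mono_is_ker[OF m] by blast
  note gd = kerD[OF g] and qd = cokerD[OF q]
  have CmDg: "Cod C m = Dom C g" using homD[OF gd(1)] by simp
  have CmDq: "Cod C m = Dom C q" using homD[OF qd(1)] by simp
  have gh: "g \<in> hom C (Cod C m) (Cod C g)" using gd(2) CmDg by simp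
  have "g \<cdot> m = Zero C (Dom C m) (Cod C g)" using gd(3) .
  then obtain r where r: "r \<in> hom C (Cod C q) (Cod C g)" "r \<cdot> q = g" using coker_factor[OF q gh] by blast
  show ?thesis unfolding is_kernel_def
  proof (intro conjI ballI impI)
    show "q \<in> Arr C" "m \<in> Arr C" using homD[OF qd(1)] homD[OF qd(2)] by simp_all
    show "Cod C m = Dom C q" using CmDq .
    show "q \<cdot> m = Zero C (Dom C m) (Cod C q)" using qd(3) .
    fix t y assume t: "t \<in> Obj C" and y: "y \<in> hom C t (Dom C q)" and z: "q \<cdot> y = Zero C t (Cod C q)"
    have y': "y \<in> hom C t (Dom C g)" using y CmDq CmDg by simp
    have qh: "q \<in> hom C (Dom C q) (Cod C q)" using qd(1) CmDq by simp
    have "g \<cdot> y = r \<cdot> (q \<cdot> y)" using assoc[OF y qh r(1)] r(2) by simp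
    also have "\<dots> = Zero C t (Cod C g)" using z zero_comp[OF r(1) t] by simp
    finally have "g \<cdot> y = Zero C t (Cod C g)" .
    then show "\<exists>!h. h \<in> hom C t (Dom C m) \<and> m \<cdot> h = y" using ker_univ[OF g t y'] by simp
  qed
qed

lemma sesD: assumes "ses C (i, \<alpha>)"
  shows "is_kernel C i \<alpha>" "is_cokernel C \<alpha> i"
    "i \<in> hom C (Dom C i) (Cod C i)" "\<alpha> \<in> hom C (Cod C i) (Cod C \<alpha>)"
    "Dom C \<alpha> = Cod C i" "\<alpha> \<cdot> i = Zero C (Dom C i) (Cod C \<alpha>)"
proof -
  show k: "is_kernel C i \<alpha>" and c: "is_cokernel C \<alpha> i" using assms unfolding ses_def by simp_all
  note K = kerD[OF k] and Q = cokerD[OF c]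
  show "Dom C \<alpha> = Cod C i" using homD[OF K(1)] by simp
  then show "i \<in> hom C (Dom C i) (Cod C i)" "\<alpha> \<in> hom C (Cod C i) (Cod C \<alpha>)"
    "\<alpha> \<cdot> i = Zero C (Dom C i) (Cod C \<alpha>)" using K by simp_all
qed

lemma ses_morph_iso:
  assumes s: "ses C (i, \<alpha>)" and s': "ses C (i', \<alpha>')"
    and h: "h \<in> hom C (Cod C i) (Cod C i')" and ah: "\<alpha>' \<cdot> h = \<alpha>"
    and u: "u \<in> hom C (Dom C i) (Dom C i')" and hi: "h \<cdot> i = i' \<cdot> u" and iu: "iso C u"
  shows "iso C h"
proof -
  note S = sesD[OF s] and S' = sesD[OF s']
  define K where "K = Dom C i"
  define X where "X = Cod C i"
  define K' where "K' = Dom C i'"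
  define X' where "X' = Cod C i'"
  define Y' where "Y' = Cod C \<alpha>'"
  have iH: "i \<in> hom C K X" and i'H: "i' \<in> hom C K' X'" using S S' K_def X_def K'_def X'_def by auto
  have a'H: "\<alpha>' \<in> hom C X' Y'" using S' X'_def Y'_def by auto
  have hH: "h \<in> hom C X X'" and uH: "u \<in> hom C K K'" using h u X_def X'_def K_def K'_def by auto
  have aH: "\<alpha> \<in> hom C X Y'" using ah comp_hom[OF hH a'H] by simp
  have CY: "Cod C \<alpha> = Y'" using homD[OF aH] by simp
  obtain v where v: "v \<in> hom C K' K" "v \<cdot> u = Ident C K" "u \<cdot> v = Ident C K'" using isoD[OF iu uH] by blast
  have Ko: "K \<in> Obj C" and K'o: "K' \<in> Obj C" and Xo: "X \<in> Obj C" and X'o: "X' \<in> Obj C" and Y'o: "Y' \<in> Obj C"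
    using hom_objs iH i'H a'H by blast+
  have m: "mono C h"
  proof (rule mono_by_zero[OF hH])
    fix t g assume t: "t \<in> Obj C" and g: "g \<in> hom C t X" and hg: "h \<cdot> g = Zero C t X'"
    have "\<alpha> \<cdot> g = \<alpha>' \<cdot> (h \<cdot> g)" using ah assoc[OF g hH a'H] by simp
    also have "\<dots> = Zero C t Y'" using hg zero_comp[OF a'H t] by simp
    finally have ag: "\<alpha> \<cdot> g = Zero C t (Cod C \<alpha>)" using CY by simp
    obtain s where sH: "s \<in> hom C t K" and isg: "i \<cdot> s = g"
      using ker_factor[OF S(1), of g t] g ag S(5) X_def K_def by auto
    have "i' \<cdot> (u \<cdot> s) = (i' \<cdot> u) \<cdot> s" using assoc[OF sH uH i'H] .
    also have "\<dots> = (h \<cdot> i) \<cdot> s" using hi by simp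
    also have "\<dots> = h \<cdot> g" using assoc[OF sH iH hH] isg by simp
    also have "\<dots> = i' \<cdot> Zero C t K'" using hg zero_comp[OF i'H t] by simp
    finally have "u \<cdot> s = Zero C t K'"
      using mono_cancel[OF ker_mono[OF S'(1)] i'H comp_hom[OF sH uH] zero_hom[OF t K'o]] by simp
    hence "s = Zero C t K" using assoc[OF sH uH v(1)] v(2) id_l[OF sH] zero_comp[OF v(1) t] by simp
    thus "g = Zero C t X" using isg zero_comp[OF iH t] by simp
  qed
  have e: "epi C h"
  proof (rule epi_by_zero[OF hH])
    fix t g assume t: "t \<in> Obj C" and g: "g \<in> hom C X' t" and gh: "g \<cdot> h = Zero C X t"
    have gi': "g \<cdot> i' \<in> hom C K' t" using i'H g by blast
    have "(g \<cdot> i') \<cdot> u = g \<cdot> (i' \<cdot> u)" using assoc[OF uH i'H g] by simp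
    also have "\<dots> = g \<cdot> (h \<cdot> i)" using hi by simp
    also have "\<dots> = (g \<cdot> h) \<cdot> i" using assoc[OF iH hH g] .
    also have "\<dots> = Zero C K t" using gh comp_zero[OF iH t] by simp
    finally have z1: "(g \<cdot> i') \<cdot> u = Zero C K t" .
    have "g \<cdot> i' = (g \<cdot> i') \<cdot> (u \<cdot> v)" using v(3) id_r[OF gi'] by simp
    also have "\<dots> = ((g \<cdot> i') \<cdot> u) \<cdot> v" using assoc[OF v(1) uH gi'] .
    also have "\<dots> = Zero C K' t" using z1 comp_zero[OF v(1) t] by simp
    finally have gz: "g \<cdot> i' = Zero C (Dom C i') t" using K'_def by simp
    obtain s where sH: "s \<in> hom C Y' t" and sa: "s \<cdot> \<alpha>' = g"
      using coker_factor[OF S'(2), of g t] g gz X'_def Y'_def by auto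
    have "s \<cdot> \<alpha> = (s \<cdot> \<alpha>') \<cdot> h" using ah assoc[OF hH a'H sH] by simp
    also have "\<dots> = Zero C Y' t \<cdot> \<alpha>" using sa gh comp_zero[OF aH t] by simp
    finally have "s = Zero C Y' t"
      using epi_cancel[OF coker_epi[OF S(2)] aH sH zero_hom[OF Y'o t]] by simp
    thus "g = Zero C X' t" using sa comp_zero[OF a'H t] by simp
  qed
  show ?thesis using mono_epi_iso[OF m e hH] .
qed

lemma bipD: assumes "is_biproduct C a b p i1 i2 p1 p2"
  shows "p \<in> Obj C" "i1 \<in> hom C a p" "i2 \<in> hom C b p" "p1 \<in> hom C p a" "p2 \<in> hom C p b"
     "p1 \<cdot> i1 = Ident C a" "p2 \<cdot> i2 = Ident C b"
     "p1 \<cdot> i2 = Zero C b a" "p2 \<cdot> i1 = Zero C a b"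
     "(i1 \<cdot> p1) \<oplus> (i2 \<cdot> p2) = Ident C p"
  using assms unfolding is_biproduct_def by auto

lemma bip_p1: assumes B: "is_biproduct C a b p i1 i2 p1 p2" and x: "x \<in> hom C t a" and y: "y \<in> hom C t b"
  shows "p1 \<cdot> (i1 \<cdot> x \<oplus> i2 \<cdot> y) = x"
proof -
  note D = bipD[OF B]
  have t: "t \<in> Obj C" and ao: "a \<in> Obj C" using hom_objs x by blast+
  have "p1 \<cdot> (i1 \<cdot> x \<oplus> i2 \<cdot> y) = p1 \<cdot> (i1 \<cdot> x) \<oplus> p1 \<cdot> (i2 \<cdot> y)"
    using distl[OF comp_hom[OF x D(2)] comp_hom[OF y D(3)] D(4)] .
  also have "\<dots> = (p1 \<cdot> i1) \<cdot> x \<oplus> (p1 \<cdot> i2) \<cdot> y" using assoc[OF x D(2) D(4)] assoc[OF y D(3) D(4)] by simp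
  also have "\<dots> = x \<oplus> Zero C t a" using D(6,8) id_l[OF x] comp_zero[OF y ao] by simp
  also have "\<dots> = x" using add_zero[OF x] .
  finally show ?thesis .
qed

lemma bip_p2: assumes B: "is_biproduct C a b p i1 i2 p1 p2" and x: "x \<in> hom C t a" and y: "y \<in> hom C t b"
  shows "p2 \<cdot> (i1 \<cdot> x \<oplus> i2 \<cdot> y) = y"
proof -
  note D = bipD[OF B]
  have t: "t \<in> Obj C" and bo: "b \<in> Obj C" using hom_objs y by blast+
  have "p2 \<cdot> (i1 \<cdot> x \<oplus> i2 \<cdot> y) = p2 \<cdot> (i1 \<cdot> x) \<oplus> p2 \<cdot> (i2 \<cdot> y)"
    using distl[OF comp_hom[OF x D(2)] comp_hom[OF y D(3)] D(5)] .
  also have "\<dots> = (p2 \<cdot> i1) \<cdot> x \<oplus> (p2 \<cdot> i2) \<cdot> y" using assoc[OF x D(2) D(5)] assoc[OF y D(3) D(5)] by simp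
  also have "\<dots> = Zero C t b \<oplus> y" using D(7,9) id_l[OF y] comp_zero[OF x bo] by simp
  also have "\<dots> = y" using zero_add[OF y] .
  finally show ?thesis .
qed

lemma bip_c1: assumes B: "is_biproduct C a b p i1 i2 p1 p2" and g: "g \<in> hom C a t" and h: "h \<in> hom C b t"
  shows "(g \<cdot> p1 \<oplus> h \<cdot> p2) \<cdot> i1 = g"
proof -
  note D = bipD[OF B]
  have t: "t \<in> Obj C" and ao: "a \<in> Obj C" using hom_objs g by blast+
  have "(g \<cdot> p1 \<oplus> h \<cdot> p2) \<cdot> i1 = (g \<cdot> p1) \<cdot> i1 \<oplus> (h \<cdot> p2) \<cdot> i1"
    using distr[OF D(2) comp_hom[OF D(4) g] comp_hom[OF D(5) h]] .
  also have "\<dots> = g \<cdot> (p1 \<cdot> i1) \<oplus> h \<cdot> (p2 \<cdot> i1)" using assoc[OF D(2) D(4) g] assoc[OF D(2) D(5) h] by simp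
  also have "\<dots> = g \<oplus> Zero C a t" using D(6,9) id_r[OF g] zero_comp[OF h ao] by simp
  also have "\<dots> = g" using add_zero[OF g] .
  finally show ?thesis .
qed

lemma bip_c2: assumes B: "is_biproduct C a b p i1 i2 p1 p2" and g: "g \<in> hom C a t" and h: "h \<in> hom C b t"
  shows "(g \<cdot> p1 \<oplus> h \<cdot> p2) \<cdot> i2 = h"
proof -
  note D = bipD[OF B]
  have t: "t \<in> Obj C" and bo: "b \<in> Obj C" using hom_objs h by blast+
  have "(g \<cdot> p1 \<oplus> h \<cdot> p2) \<cdot> i2 = (g \<cdot> p1) \<cdot> i2 \<oplus> (h \<cdot> p2) \<cdot> i2"
    using distr[OF D(3) comp_hom[OF D(4) g] comp_hom[OF D(5) h]] .
  also have "\<dots> = g \<cdot> (p1 \<cdot> i2) \<oplus> h \<cdot> (p2 \<cdot> i2)" using assoc[OF D(3) D(4) g] assoc[OF D(3) D(5) h] by simp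
  also have "\<dots> = Zero C b t \<oplus> h" using D(7,8) id_r[OF h] zero_comp[OF g bo] by simp
  also have "\<dots> = h" using zero_add[OF h] .
  finally show ?thesis .
qed

lemma bip_split: assumes B: "is_biproduct C a b p i1 i2 p1 p2" and z: "z \<in> hom C p t"
  shows "z = (z \<cdot> i1) \<cdot> p1 \<oplus> (z \<cdot> i2) \<cdot> p2"
proof -
  note D = bipD[OF B]
  have "z = z \<cdot> Ident C p" using id_r[OF z] by simp
  also have "\<dots> = z \<cdot> (i1 \<cdot> p1) \<oplus> z \<cdot> (i2 \<cdot> p2)"
    using D(10) distl[OF comp_hom[OF D(4) D(2)] comp_hom[OF D(5) D(3)] z] by simp
  also have "\<dots> = (z \<cdot> i1) \<cdot> p1 \<oplus> (z \<cdot> i2) \<cdot> p2" using assoc[OF D(4) D(2) z] assoc[OF D(5) D(3) z] by simp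
  finally show ?thesis .
qed

lemma ee_refl: assumes "ses C (i, \<alpha>)" shows "ext_equiv C (i, \<alpha>) (i, \<alpha>)"
proof -
  note S = sesD[OF assms]
  have X: "Cod C i \<in> Obj C" using hom_objs S(3) by blast
  show ?thesis unfolding ext_equiv_def using assms id_hom[OF X] id_l[OF S(3)] id_r[OF S(4)] by auto
qed

lemma ee_trans: assumes "ext_equiv C (i1, a1) (i2, a2)" "ext_equiv C (i2, a2) (i3, a3)"
  shows "ext_equiv C (i1, a1) (i3, a3)"
proof -
  obtain f where f: "f \<in> hom C (Cod C i1) (Cod C i2)" "f \<cdot> i1 = i2" "a2 \<cdot> f = a1"
    using assms(1) unfolding ext_equiv_def by auto
  obtain g where g: "g \<in> hom C (Cod C i2) (Cod C i3)" "g \<cdot> i2 = i3" "a3 \<cdot> g = a2"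
    using assms(2) unfolding ext_equiv_def by auto
  have s1: "ses C (i1, a1)" and s3: "ses C (i3, a3)" using assms unfolding ext_equiv_def by auto
  note S1 = sesD[OF s1] and S3 = sesD[OF s3]
  have "(g \<cdot> f) \<cdot> i1 = i3" using assoc[OF S1(3) f(1) g(1)] f g by simp
  moreover have "a3 \<cdot> (g \<cdot> f) = a1" using assoc[OF f(1) g(1) S3(4)] f g by simp
  moreover have "g \<cdot> f \<in> hom C (Cod C i1) (Cod C i3)" using f g by blast
  ultimately show ?thesis using assms unfolding ext_equiv_def by auto
qed

lemma ee_sym: assumes "ext_equiv C (i, \<alpha>) (i', \<alpha>')" shows "ext_equiv C (i', \<alpha>') (i, \<alpha>)"
proof -
  obtain f where f: "f \<in> hom C (Cod C i) (Cod C i')" "f \<cdot> i = i'" "\<alpha>' \<cdot> f = \<alpha>"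
    using assms unfolding ext_equiv_def by auto
  have s: "ses C (i, \<alpha>)" and s': "ses C (i', \<alpha>')" and KK: "Dom C i = Dom C i'"
    using assms unfolding ext_equiv_def ker_obj_def by auto
  note S = sesD[OF s] and S' = sesD[OF s']
  have Ko: "Dom C i \<in> Obj C" using hom_objs S(3) by blast
  have idK: "Ident C (Dom C i) \<in> hom C (Dom C i) (Dom C i')" using id_hom[OF Ko] KK by simp
  have "f \<cdot> i = i' \<cdot> Ident C (Dom C i)" using f(2) id_r[OF S'(3)] KK by simp
  moreover have "iso C (Ident C (Dom C i))" using isoI[OF id_hom[OF Ko] id_hom[OF Ko]] id_l[OF id_hom[OF Ko]] by simp
  ultimately have "iso C f" using ses_morph_iso[OF s s' f(1) f(3) idK] by blast
  then obtain g where g: "g \<in> hom C (Cod C i') (Cod C i)" "g \<cdot> f = Ident C (Cod C i)" "f \<cdot> g = Ident C (Cod C i')"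
    using isoD[OF _ f(1)] by blast
  have "g \<cdot> i' = i" using f(2) assoc[OF S(3) f(1) g(1)] g(2) id_l[OF S(3)] by simp
  moreover have "\<alpha> \<cdot> g = \<alpha>'" using f(3) assoc[OF g(1) f(1) S'(4)] g(3) id_r[OF S'(4)] by simp
  ultimately show ?thesis using assms g(1) unfolding ext_equiv_def by auto
qed

lemma ee_class: assumes "ext_equiv C \<zeta> \<eta>" shows "ext_class C \<zeta> = ext_class C \<eta>"
proof -
  obtain i a where z: "\<zeta> = (i, a)" by (cases \<zeta>)
  obtain j b where e: "\<eta> = (j, b)" by (cases \<eta>)
  have 1: "ext_equiv C (i, a) (j, b)" using assms z e by simp
  have 2: "ext_equiv C (j, b) (i, a)" using ee_sym[OF 1] .
  show ?thesis unfolding ext_class_def z e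
  proof (intro set_eqI iffI; simp)
    fix x assume "ext_equiv C (i, a) x"
    then show "ext_equiv C (j, b) x" using ee_trans[OF 2] by (cases x) auto
  next
    fix x assume "ext_equiv C (j, b) x"
    then show "ext_equiv C (i, a) x" using ee_trans[OF 1] by (cases x) auto
  qed
qed

lemma poD: assumes "is_pushout C i u f j"
  shows "i \<in> hom C (Dom C i) (Cod C i)" "u \<in> hom C (Dom C i) (Cod C u)"
    "f \<in> hom C (Cod C i) (Cod C f)" "j \<in> hom C (Cod C u) (Cod C f)" "f \<cdot> i = j \<cdot> u"
proof -
  have H: "i \<in> Arr C \<and> u \<in> Arr C \<and> f \<in> Arr C \<and> j \<in> Arr C \<and>
     Dom C i = Dom C u \<and> Dom C f = Cod C i \<and> Dom C j = Cod C u \<and> Cod C f = Cod C j \<and>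
     f \<cdot> i = j \<cdot> u"
    apply (insert assms) apply (unfold is_pushout_def) apply (elim conjE) apply (intro conjI) apply assumption+ done
  then show "i \<in> hom C (Dom C i) (Cod C i)" "u \<in> hom C (Dom C i) (Cod C u)"
    "f \<in> hom C (Cod C i) (Cod C f)" "j \<in> hom C (Cod C u) (Cod C f)" "f \<cdot> i = j \<cdot> u"
    unfolding hom_def by simp_all
qed

lemma po_univ: assumes P: "is_pushout C i u f j" and t: "t \<in> Obj C" and g: "g \<in> hom C (Cod C i) t"
  and h: "h \<in> hom C (Cod C u) t" and e: "g \<cdot> i = h \<cdot> u"
  shows "\<exists>!p. p \<in> hom C (Cod C f) t \<and> p \<cdot> f = g \<and> p \<cdot> j = h"
proof -
  have H: "\<forall>t\<in>Obj C. \<forall>g\<in>hom C (Cod C i) t. \<forall>h\<in>hom C (Cod C u) t.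
        g \<cdot> i = h \<cdot> u \<longrightarrow>
        (\<exists>!p. p \<in> hom C (Cod C f) t \<and> p \<cdot> f = g \<and> p \<cdot> j = h)"
    apply (insert P) apply (unfold is_pushout_def) apply (elim conjE) apply assumption done
  show ?thesis by (rule mp[OF bspec[OF bspec[OF bspec[OF H t] g] h] e])
qed

lemma po_uniq: assumes P: "is_pushout C i u f j" and r: "r \<in> hom C (Cod C f) t" and r': "r' \<in> hom C (Cod C f) t"
  and e1: "r \<cdot> f = r' \<cdot> f" and e2: "r \<cdot> j = r' \<cdot> j"
  shows "r = r'"
proof -
  note D = poD[OF P]
  have t: "t \<in> Obj C" using hom_objs[OF r] by simp
  have g: "r \<cdot> f \<in> hom C (Cod C i) t" using comp_hom[OF D(3) r] .
  have h: "r \<cdot> j \<in> hom C (Cod C u) t" using comp_hom[OF D(4) r] .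
  have "(r \<cdot> f) \<cdot> i = r \<cdot> (f \<cdot> i)" using assoc[OF D(1) D(3) r] by simp
  also have "\<dots> = (r \<cdot> j) \<cdot> u" using D(5) assoc[OF D(2) D(4) r] by simp
  finally have e: "(r \<cdot> f) \<cdot> i = (r \<cdot> j) \<cdot> u" .
  show ?thesis by (rule ex1_uniq[OF po_univ[OF P t g h e]]) (use r r' e1 e2 in simp_all)
qed

lemma po_exists: assumes s: "ses C (i, \<alpha>)" and uH: "u \<in> hom C (Dom C i) K'"
  shows "\<exists>\<eta>. pushout_ext C u (i, \<alpha>) \<eta>"
proof -
  note S = sesD[OF s]
  define K where "K = Dom C i"
  define X where "X = Cod C i"
  define Y where "Y = Cod C \<alpha>"
  have iH: "i \<in> hom C K X" and aH: "\<alpha> \<in> hom C X Y" using S K_def X_def Y_def by simp_all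
  have uH': "u \<in> hom C K K'" using uH K_def by simp
  have Ko: "K \<in> Obj C" and Xo: "X \<in> Obj C" and Yo: "Y \<in> Obj C" and K'o: "K' \<in> Obj C"
    using hom_objs[OF iH] hom_objs[OF aH] hom_objs[OF uH'] by auto
  obtain P i1 i2 p1 p2 where B: "is_biproduct C X K' P i1 i2 p1 p2" using bip_ex[OF Xo K'o] by blast
  note BD = bipD[OF B]
  define nu where "nu = neg K K' u"
  have nuH: "nu \<in> hom C K K'" using neg[OF uH'] nu_def by simp
  define m where "m = i1 \<cdot> i \<oplus> i2 \<cdot> nu"
  have mH: "m \<in> hom C K P" unfolding m_def using iH nuH BD by blast
  obtain q where q: "is_cokernel C q m" using coker_ex homD[OF mH] by blast
  note qd = cokerD[OF q]
  define Q where "Q = Cod C q"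
  have qH: "q \<in> hom C P Q" using qd(1) homD[OF mH] Q_def by simp
  have Qo: "Q \<in> Obj C" using hom_objs[OF qH] by simp
  define f where "f = q \<cdot> i1"
  define j where "j = q \<cdot> i2"
  have fH: "f \<in> hom C X Q" and jH: "j \<in> hom C K' Q" using qH BD f_def j_def by blast+
  have "f \<cdot> i \<oplus> neg K Q (j \<cdot> u) = f \<cdot> i \<oplus> j \<cdot> nu" using comp_neg[OF uH' jH] nu_def by simp
  also have "\<dots> = q \<cdot> (i1 \<cdot> i) \<oplus> q \<cdot> (i2 \<cdot> nu)" using f_def j_def assoc[OF iH BD(2) qH] assoc[OF nuH BD(3) qH] by simp
  also have "\<dots> = q \<cdot> m" unfolding m_def using distl[OF comp_hom[OF iH BD(2)] comp_hom[OF nuH BD(3)] qH] by simp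
  also have "\<dots> = Zero C K Q" using qd(3) homD[OF mH] Q_def by simp
  finally have fi: "f \<cdot> i = j \<cdot> u" using diff_zero[OF comp_hom[OF iH fH] comp_hom[OF uH' jH]] by simp
  have PO: "is_pushout C i u f j" unfolding is_pushout_def
  proof (intro conjI ballI impI)
    show "i \<in> Arr C" "u \<in> Arr C" "f \<in> Arr C" "j \<in> Arr C" using homD[OF iH] homD[OF uH'] homD[OF fH] homD[OF jH] by simp_all
    show "Dom C i = Dom C u" "Dom C f = Cod C i" "Dom C j = Cod C u" "Cod C f = Cod C j" "f \<cdot> i = j \<cdot> u"
      using homD[OF iH] homD[OF uH'] homD[OF fH] homD[OF jH] fi by simp_all
    fix t g h assume t: "t \<in> Obj C" and g0: "g \<in> hom C (Cod C i) t" and h0: "h \<in> hom C (Cod C u) t"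
      and gh: "g \<cdot> i = h \<cdot> u"
    have g: "g \<in> hom C X t" and h: "h \<in> hom C K' t" using g0 h0 X_def homD[OF uH'] by simp_all
    define w where "w = g \<cdot> p1 \<oplus> h \<cdot> p2"
    have wH: "w \<in> hom C P t" unfolding w_def using g h BD by blast
    have w1: "w \<cdot> i1 = g" unfolding w_def using bip_c1[OF B g h] .
    have w2: "w \<cdot> i2 = h" unfolding w_def using bip_c2[OF B g h] .
    have "w \<cdot> m = w \<cdot> (i1 \<cdot> i) \<oplus> w \<cdot> (i2 \<cdot> nu)" unfolding m_def using distl[OF comp_hom[OF iH BD(2)] comp_hom[OF nuH BD(3)] wH] .
    also have "\<dots> = g \<cdot> i \<oplus> h \<cdot> nu" using assoc[OF iH BD(2) wH] assoc[OF nuH BD(3) wH] w1 w2 by simp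
    also have "\<dots> = h \<cdot> u \<oplus> neg K t (h \<cdot> u)" using gh comp_neg[OF uH' h] nu_def by simp
    also have "\<dots> = Zero C K t" using neg[OF comp_hom[OF uH' h]] by simp
    finally have wm: "w \<cdot> m = Zero C (Dom C m) t" using homD[OF mH] by simp
    have wH': "w \<in> hom C (Cod C m) t" using wH homD[OF mH] by simp
    obtain r where r: "r \<in> hom C Q t" "r \<cdot> q = w" using coker_factor[OF q wH' wm] Q_def by auto
    have u1: "\<exists>!r. r \<in> hom C (Cod C q) t \<and> r \<cdot> q = w" using coker_univ[OF q t wH' wm] .
    show "\<exists>!p. p \<in> hom C (Cod C f) t \<and> p \<cdot> f = g \<and> p \<cdot> j = h"
    proof (rule ex1I[of _ r])
      have "r \<cdot> f = g" using f_def assoc[OF BD(2) qH r(1)] r(2) w1 by simp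
      moreover have "r \<cdot> j = h" using j_def assoc[OF BD(3) qH r(1)] r(2) w2 by simp
      ultimately show "r \<in> hom C (Cod C f) t \<and> r \<cdot> f = g \<and> r \<cdot> j = h" using r(1) homD[OF fH] by simp
    next
      fix p assume p: "p \<in> hom C (Cod C f) t \<and> p \<cdot> f = g \<and> p \<cdot> j = h"
      have pH: "p \<in> hom C Q t" using p homD[OF fH] by simp
      have pq: "p \<cdot> q \<in> hom C P t" using comp_hom[OF qH pH] .
      have "p \<cdot> q = ((p \<cdot> q) \<cdot> i1) \<cdot> p1 \<oplus> ((p \<cdot> q) \<cdot> i2) \<cdot> p2" using bip_split[OF B pq] .
      also have "\<dots> = w" unfolding w_def using assoc[OF BD(2) qH pH] assoc[OF BD(3) qH pH] p f_def j_def by simp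
      finally have "p \<cdot> q = w" .
      then show "p = r" using ex1_uniq[OF u1, of p r] pH r Q_def by simp
    qed
  qed
  have az: "\<alpha> \<cdot> i = Zero C K' Y \<cdot> u" using S(6) K_def Y_def comp_zero[OF uH' Yo] by simp
  obtain \<beta> where b: "\<beta> \<in> hom C (Cod C f) Y" "\<beta> \<cdot> f = \<alpha>" "\<beta> \<cdot> j = Zero C K' Y"
    using po_univ[OF PO Yo _ _ az] aH X_def zero_hom[OF K'o Yo] homD[OF uH'] by auto
  have "pushout_ext C u (i, \<alpha>) (j, \<beta>)" unfolding pushout_ext_def
    using PO b homD[OF uH'] Y_def by auto
  then show ?thesis by blast
qed

lemma po_ses: assumes s: "ses C (i, \<alpha>)" and PE: "pushout_ext C u (i, \<alpha>) (j, \<beta>)"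
  shows "ses C (j, \<beta>)"
proof -
  note S = sesD[OF s]
  obtain f where PO: "is_pushout C i u f j" and bH0: "\<beta> \<in> hom C (Cod C f) (Cod C \<alpha>)"
    and bf: "\<beta> \<cdot> f = \<alpha>" and bj0: "\<beta> \<cdot> j = Zero C (Cod C u) (Cod C \<alpha>)"
    using PE unfolding pushout_ext_def by auto
  note D = poD[OF PO]
  define K where "K = Dom C i"
  define X where "X = Cod C i"
  define Y where "Y = Cod C \<alpha>"
  define K' where "K' = Cod C u"
  define E where "E = Cod C f"
  have iH: "i \<in> hom C K X" and aH: "\<alpha> \<in> hom C X Y" and uH: "u \<in> hom C K K'"
    and fH: "f \<in> hom C X E" and jH: "j \<in> hom C K' E" and bH: "\<beta> \<in> hom C E Y"
    using S D bH0 K_def X_def Y_def K'_def E_def by simp_all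
  have bj: "\<beta> \<cdot> j = Zero C K' Y" using bj0 K'_def Y_def by simp
  have fi: "f \<cdot> i = j \<cdot> u" using D(5) .
  have Ko: "K \<in> Obj C" and Xo: "X \<in> Obj C" and Yo: "Y \<in> Obj C" and K'o: "K' \<in> Obj C" and Eo: "E \<in> Obj C"
    using hom_objs[OF iH] hom_objs[OF aH] hom_objs[OF uH] hom_objs[OF fH] by auto
  have c: "is_cokernel C \<beta> j" unfolding is_cokernel_def
  proof (intro conjI ballI impI)
    show "j \<in> Arr C" "\<beta> \<in> Arr C" "Dom C \<beta> = Cod C j" "\<beta> \<cdot> j = Zero C (Dom C j) (Cod C \<beta>)"
      using homD[OF jH] homD[OF bH] bj by simp_all
    fix t g assume t: "t \<in> Obj C" and g0: "g \<in> hom C (Cod C j) t" and gj0: "g \<cdot> j = Zero C (Dom C j) t"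
    have g: "g \<in> hom C E t" and gj: "g \<cdot> j = Zero C K' t" using g0 gj0 homD[OF jH] by simp_all
    have gf: "g \<cdot> f \<in> hom C (Cod C i) t" using comp_hom[OF fH g] X_def by simp
    have "(g \<cdot> f) \<cdot> i = g \<cdot> (j \<cdot> u)" using assoc[OF iH fH g] fi by simp
    also have "\<dots> = Zero C K t" using assoc[OF uH jH g] gj comp_zero[OF uH t] by simp
    finally have gfi: "(g \<cdot> f) \<cdot> i = Zero C (Dom C i) t" using K_def by simp
    have u1: "\<exists>!h. h \<in> hom C (Cod C \<alpha>) t \<and> h \<cdot> \<alpha> = g \<cdot> f" using coker_univ[OF S(2) t gf gfi] .
    then obtain h where h: "h \<in> hom C Y t" "h \<cdot> \<alpha> = g \<cdot> f" using Y_def by auto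
    show "\<exists>!h. h \<in> hom C (Cod C \<beta>) t \<and> h \<cdot> \<beta> = g"
    proof (rule ex1I[of _ h])
      have "h \<cdot> \<beta> = g"
      proof (rule po_uniq[OF PO])
        show "h \<cdot> \<beta> \<in> hom C (Cod C f) t" "g \<in> hom C (Cod C f) t" using comp_hom[OF bH h(1)] g E_def by simp_all
        show "(h \<cdot> \<beta>) \<cdot> f = g \<cdot> f" using assoc[OF fH bH h(1)] bf h(2) by simp
        show "(h \<cdot> \<beta>) \<cdot> j = g \<cdot> j" using assoc[OF jH bH h(1)] bj gj zero_comp[OF h(1) K'o] by simp
      qed
      then show "h \<in> hom C (Cod C \<beta>) t \<and> h \<cdot> \<beta> = g" using h(1) homD[OF bH] by simp
    next
      fix p assume p: "p \<in> hom C (Cod C \<beta>) t \<and> p \<cdot> \<beta> = g"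
      have pH: "p \<in> hom C Y t" using p homD[OF bH] by simp
      have "p \<cdot> \<alpha> = g \<cdot> f" using assoc[OF fH bH pH] bf p by simp
      then show "p = h" using ex1_uniq[OF u1, of p h] pH h Y_def by simp
    qed
  qed
  obtain P i1 i2 p1 p2 where B: "is_biproduct C X K' P i1 i2 p1 p2" using bip_ex[OF Xo K'o] by blast
  note BD = bipD[OF B]
  define nu where "nu = neg K K' u"
  have nuH: "nu \<in> hom C K K'" using neg[OF uH] nu_def by simp
  define m where "m = i1 \<cdot> i \<oplus> i2 \<cdot> nu"
  have mH: "m \<in> hom C K P" unfolding m_def using iH nuH BD by blast
  have p1m: "p1 \<cdot> m = i" unfolding m_def using bip_p1[OF B iH nuH] .
  have imono: "mono C i" using ker_mono[OF S(1)] .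
  have mmono: "mono C m"
  proof (rule mono_by_zero[OF mH])
    fix t b assume t: "t \<in> Obj C" and b: "b \<in> hom C t K" and mb: "m \<cdot> b = Zero C t P"
    have "i \<cdot> b = p1 \<cdot> (m \<cdot> b)" using assoc[OF b mH BD(4)] p1m by simp
    also have "\<dots> = i \<cdot> Zero C t K" using mb zero_comp[OF BD(4) t] zero_comp[OF iH t] by simp
    finally show "b = Zero C t K" using mono_cancel[OF imono iH b zero_hom[OF t Ko]] by simp
  qed
  define c' where "c' = f \<cdot> p1 \<oplus> j \<cdot> p2"
  have c'H: "c' \<in> hom C P E" unfolding c'_def using fH jH BD by blast
  have c1: "c' \<cdot> i1 = f" unfolding c'_def using bip_c1[OF B fH jH] .
  have c2: "c' \<cdot> i2 = j" unfolding c'_def using bip_c2[OF B fH jH] .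
  have cc: "is_cokernel C c' m" unfolding is_cokernel_def
  proof (intro conjI ballI impI)
    show "m \<in> Arr C" "c' \<in> Arr C" "Dom C c' = Cod C m" using homD[OF mH] homD[OF c'H] by simp_all
    have "c' \<cdot> m = c' \<cdot> (i1 \<cdot> i) \<oplus> c' \<cdot> (i2 \<cdot> nu)" unfolding m_def using distl[OF comp_hom[OF iH BD(2)] comp_hom[OF nuH BD(3)] c'H] .
    also have "\<dots> = j \<cdot> u \<oplus> neg K E (j \<cdot> u)" using assoc[OF iH BD(2) c'H] assoc[OF nuH BD(3) c'H] c1 c2 fi comp_neg[OF uH jH] nu_def by simp
    also have "\<dots> = Zero C K E" using neg[OF comp_hom[OF uH jH]] by simp
    finally show "c' \<cdot> m = Zero C (Dom C m) (Cod C c')" using homD[OF mH] homD[OF c'H] by simp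
    fix t g assume t: "t \<in> Obj C" and g0: "g \<in> hom C (Cod C m) t" and gm0: "g \<cdot> m = Zero C (Dom C m) t"
    have g: "g \<in> hom C P t" and gm: "g \<cdot> m = Zero C K t" using g0 gm0 homD[OF mH] by simp_all
    have g1: "g \<cdot> i1 \<in> hom C X t" and g2: "g \<cdot> i2 \<in> hom C K' t" using g BD by blast+
    have "(g \<cdot> i1) \<cdot> i \<oplus> neg K t ((g \<cdot> i2) \<cdot> u) = (g \<cdot> i1) \<cdot> i \<oplus> (g \<cdot> i2) \<cdot> nu" using comp_neg[OF uH g2] nu_def by simp
    also have "\<dots> = g \<cdot> m" unfolding m_def using distl[OF comp_hom[OF iH BD(2)] comp_hom[OF nuH BD(3)] g]
        assoc[OF iH BD(2) g] assoc[OF nuH BD(3) g] by simp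
    also have "\<dots> = Zero C K t" using gm .
    finally have e: "(g \<cdot> i1) \<cdot> i = (g \<cdot> i2) \<cdot> u" using diff_zero[OF comp_hom[OF iH g1] comp_hom[OF uH g2]] by simp
    have u1: "\<exists>!p. p \<in> hom C (Cod C f) t \<and> p \<cdot> f = g \<cdot> i1 \<and> p \<cdot> j = g \<cdot> i2"
      using po_univ[OF PO t _ _ e] g1 g2 X_def K'_def by simp
    then obtain r where r: "r \<in> hom C E t" "r \<cdot> f = g \<cdot> i1" "r \<cdot> j = g \<cdot> i2" using E_def by auto
    show "\<exists>!h. h \<in> hom C (Cod C c') t \<and> h \<cdot> c' = g"
    proof (rule ex1I[of _ r])
      have "r \<cdot> c' = r \<cdot> (f \<cdot> p1) \<oplus> r \<cdot> (j \<cdot> p2)" unfolding c'_def using distl[OF comp_hom[OF BD(4) fH] comp_hom[OF BD(5) jH] r(1)] .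
      also have "\<dots> = (g \<cdot> i1) \<cdot> p1 \<oplus> (g \<cdot> i2) \<cdot> p2" using assoc[OF BD(4) fH r(1)] assoc[OF BD(5) jH r(1)] r by simp
      also have "\<dots> = g" using bip_split[OF B g] by simp
      finally show "r \<in> hom C (Cod C c') t \<and> r \<cdot> c' = g" using r(1) homD[OF c'H] by simp
    next
      fix p assume p: "p \<in> hom C (Cod C c') t \<and> p \<cdot> c' = g"
      have pH: "p \<in> hom C E t" using p homD[OF c'H] by simp
      have "p \<cdot> f = g \<cdot> i1" using assoc[OF BD(2) c'H pH] c1 p by simp
      moreover have "p \<cdot> j = g \<cdot> i2" using assoc[OF BD(3) c'H pH] c2 p by simp
      ultimately show "p = r" using ex1_uniq[OF u1, of p r] pH r E_def by simp
    qed
  qed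
  have km: "is_kernel C m c'" using mono_coker_ker[OF mmono cc] .
  have jmono: "mono C j"
  proof (rule mono_by_zero[OF jH])
    fix t a assume t: "t \<in> Obj C" and a: "a \<in> hom C t K'" and ja: "j \<cdot> a = Zero C t E"
    have ia: "i2 \<cdot> a \<in> hom C t (Dom C c')" using comp_hom[OF a BD(3)] homD[OF c'H] by simp
    have "c' \<cdot> (i2 \<cdot> a) = Zero C t (Cod C c')" using assoc[OF a BD(3) c'H] c2 ja homD[OF c'H] by simp
    then obtain b where b0: "b \<in> hom C t (Dom C m)" and mb: "m \<cdot> b = i2 \<cdot> a" using ker_factor[OF km ia] by blast
    have b: "b \<in> hom C t K" using b0 homD[OF mH] by simp
    have "i \<cdot> b = p1 \<cdot> (m \<cdot> b)" using assoc[OF b mH BD(4)] p1m by simp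
    also have "\<dots> = (p1 \<cdot> i2) \<cdot> a" using mb assoc[OF a BD(3) BD(4)] by simp
    also have "\<dots> = i \<cdot> Zero C t K" using BD(8) comp_zero[OF a Xo] zero_comp[OF iH t] by simp
    finally have "b = Zero C t K" using mono_cancel[OF imono iH b zero_hom[OF t Ko]] by simp
    then have "i2 \<cdot> a = Zero C t P" using mb zero_comp[OF mH t] by simp
    then have "p2 \<cdot> (i2 \<cdot> a) = Zero C t K'" using zero_comp[OF BD(5) t] by simp
    then show "a = Zero C t K'" using assoc[OF a BD(3) BD(5)] BD(7) id_l[OF a] by simp
  qed
  have "is_kernel C j \<beta>" using mono_coker_ker[OF jmono c] .
  then show ?thesis unfolding ses_def using c by simp
qed

lemma conn_obtain:
  assumes s: "ses C (i, \<alpha>)" and u: "u \<in> hom C (Dom C i) (Dom C i)"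
  obtains j \<beta> f where "conn C (i, \<alpha>) u = ext_class C (j, \<beta>)" "ses C (j, \<beta>)" "is_pushout C i u f j"
    "\<beta> \<in> hom C (Cod C f) (Cod C \<alpha>)" "\<beta> \<cdot> f = \<alpha>" "\<beta> \<cdot> j = Zero C (Dom C i) (Cod C \<alpha>)"
proof -
  define \<eta> where "\<eta> = (SOME \<eta>. pushout_ext C u (i, \<alpha>) \<eta>)"
  have pe: "pushout_ext C u (i, \<alpha>) \<eta>" unfolding \<eta>_def using po_exists[OF s u] by (rule someI_ex)
  obtain j \<beta> where e: "\<eta> = (j, \<beta>)" by (cases \<eta>)
  have c: "conn C (i, \<alpha>) u = ext_class C (j, \<beta>)" unfolding conn_def \<eta>_def[symmetric] e ..
  have pe': "pushout_ext C u (i, \<alpha>) (j, \<beta>)" using pe e by simp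
  have ss: "ses C (j, \<beta>)" using po_ses[OF s pe'] .
  obtain f where "is_pushout C i u f j" "\<beta> \<in> hom C (Cod C f) (Cod C \<alpha>)" "\<beta> \<cdot> f = \<alpha>"
    "\<beta> \<cdot> j = Zero C (Cod C u) (Cod C \<alpha>)" using pe' unfolding pushout_ext_def by auto
  moreover have "Cod C u = Dom C i" using homD[OF u] by simp
  ultimately show ?thesis using that[OF c ss] by simp
qed

lemma conn_id: assumes s: "ses C (i, \<alpha>)" shows "conn C (i, \<alpha>) (Ident C (Dom C i)) = ext_class C (i, \<alpha>)"
proof -
  note S = sesD[OF s]
  have Ko: "Dom C i \<in> Obj C" using hom_objs[OF S(3)] by simp
  have idH: "Ident C (Dom C i) \<in> hom C (Dom C i) (Dom C i)" using id_hom[OF Ko] .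
  obtain j \<beta> f where c: "conn C (i, \<alpha>) (Ident C (Dom C i)) = ext_class C (j, \<beta>)" and ss: "ses C (j, \<beta>)"
    and PO: "is_pushout C i (Ident C (Dom C i)) f j" and b: "\<beta> \<in> hom C (Cod C f) (Cod C \<alpha>)" "\<beta> \<cdot> f = \<alpha>"
    using conn_obtain[OF s idH] by metis
  note D = poD[OF PO]
  have CI: "Cod C (Ident C (Dom C i)) = Dom C i" using homD[OF idH] by simp
  have jH: "j \<in> hom C (Dom C i) (Cod C f)" using D(4) CI by simp
  have fi: "f \<cdot> i = j" using D(5) id_r[OF jH] by simp
  have "ext_equiv C (i, \<alpha>) (j, \<beta>)" unfolding ext_equiv_def ker_obj_def end_obj_def
    using s ss homD[OF jH] homD[OF b(1)] D(3) fi b(2) by auto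
  then show ?thesis using ee_class c by simp
qed

lemma equiv_back:
  assumes s: "ses C (i, \<alpha>)" and u: "u \<in> hom C (Dom C i) (Dom C i)"
    and eq: "ext_class C (i, \<alpha>) = conn C (i, \<alpha>) u"
  shows "\<exists>h\<in>hom C (Cod C i) (Cod C i). \<alpha> \<cdot> h = \<alpha> \<and> h \<cdot> i = i \<cdot> u"
proof -
  note S = sesD[OF s]
  obtain j \<beta> f where c: "conn C (i, \<alpha>) u = ext_class C (j, \<beta>)" and ss: "ses C (j, \<beta>)"
    and PO: "is_pushout C i u f j" and b: "\<beta> \<in> hom C (Cod C f) (Cod C \<alpha>)" "\<beta> \<cdot> f = \<alpha>"
    using conn_obtain[OF s u] by metis
  note D = poD[OF PO]
  have "(i, \<alpha>) \<in> ext_class C (i, \<alpha>)" unfolding ext_class_def using ee_refl[OF s] by simp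
  then have "ext_equiv C (j, \<beta>) (i, \<alpha>)" using eq c unfolding ext_class_def by simp
  then obtain g where g: "g \<in> hom C (Cod C j) (Cod C i)" "g \<cdot> j = i" "\<alpha> \<cdot> g = \<beta>"
    unfolding ext_equiv_def by auto
  have CjCf: "Cod C j = Cod C f" using homD[OF D(4)] by simp
  have gH: "g \<in> hom C (Cod C f) (Cod C i)" using g(1) CjCf by simp
  have uH: "u \<in> hom C (Dom C i) (Cod C u)" using D(2) .
  have hH: "g \<cdot> f \<in> hom C (Cod C i) (Cod C i)" using comp_hom[OF D(3) gH] .
  have "\<alpha> \<cdot> (g \<cdot> f) = \<alpha>" using assoc[OF D(3) gH S(4)] g(3) b(2) by simp
  moreover have "(g \<cdot> f) \<cdot> i = i \<cdot> u" using assoc[OF S(3) D(3) gH] D(5) assoc[OF uH D(4) gH] g(2) by simp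
  ultimately show ?thesis using hH by blast
qed

lemma iso_from_h:
  assumes s: "ses C (i, \<alpha>)" and u: "u \<in> hom C (Dom C i) (Dom C i)"
    and h: "h \<in> hom C (Cod C i) (Cod C i)" and ih: "iso C h" and ah: "\<alpha> \<cdot> h = \<alpha>" and hi: "h \<cdot> i = i \<cdot> u"
  shows "iso C u"
proof -
  note S = sesD[OF s]
  obtain k where k: "k \<in> hom C (Cod C i) (Cod C i)" "k \<cdot> h = Ident C (Cod C i)" "h \<cdot> k = Ident C (Cod C i)"
    using isoD[OF ih h] by blast
  have ak: "\<alpha> \<cdot> k = \<alpha>" using assoc[OF k(1) h S(4)] ah k(3) id_r[OF S(4)] by simp
  have ki: "k \<cdot> i \<in> hom C (Dom C i) (Dom C \<alpha>)" using comp_hom[OF S(3) k(1)] S(5) by simp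
  have "\<alpha> \<cdot> (k \<cdot> i) = Zero C (Dom C i) (Cod C \<alpha>)" using assoc[OF S(3) k(1) S(4)] ak S(6) by simp
  then obtain v where v: "v \<in> hom C (Dom C i) (Dom C i)" "i \<cdot> v = k \<cdot> i" using ker_factor[OF S(1) ki] by blast
  have Ko: "Dom C i \<in> Obj C" using hom_objs[OF S(3)] by simp
  have imono: "mono C i" using ker_mono[OF S(1)] .
  have "i \<cdot> (u \<cdot> v) = i \<cdot> Ident C (Dom C i)"
  proof -
    have "i \<cdot> (u \<cdot> v) = (i \<cdot> u) \<cdot> v" using assoc[OF v(1) u S(3)] .
    also have "\<dots> = h \<cdot> (i \<cdot> v)" using hi assoc[OF v(1) S(3) h] by simp
    also have "\<dots> = (h \<cdot> k) \<cdot> i" using v(2) assoc[OF S(3) k(1) h] by simp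
    also have "\<dots> = i \<cdot> Ident C (Dom C i)" using k(3) id_l[OF S(3)] id_r[OF S(3)] by simp
    finally show ?thesis .
  qed
  then have uv: "u \<cdot> v = Ident C (Dom C i)" using mono_cancel[OF imono S(3) comp_hom[OF v(1) u] id_hom[OF Ko]] by simp
  have "i \<cdot> (v \<cdot> u) = i \<cdot> Ident C (Dom C i)"
  proof -
    have "i \<cdot> (v \<cdot> u) = (i \<cdot> v) \<cdot> u" using assoc[OF u v(1) S(3)] .
    also have "\<dots> = k \<cdot> (i \<cdot> u)" using v(2) assoc[OF u S(3) k(1)] by simp
    also have "\<dots> = (k \<cdot> h) \<cdot> i" using hi[symmetric] assoc[OF S(3) h k(1)] by simp
    also have "\<dots> = i \<cdot> Ident C (Dom C i)" using k(2) id_l[OF S(3)] id_r[OF S(3)] by simp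
    finally show ?thesis .
  qed
  then have vu: "v \<cdot> u = Ident C (Dom C i)" using mono_cancel[OF imono S(3) comp_hom[OF u v(1)] id_hom[OF Ko]] by simp
  show ?thesis by (rule isoI[OF u v(1) vu uv])
qed

lemma dir12: assumes s: "ses C (i, \<alpha>)" and rm: "right_minimal C \<alpha>"
  shows "\<forall>u\<in>hom C (Dom C i) (Dom C i). ext_class C (i, \<alpha>) = conn C (i, \<alpha>) u \<longrightarrow> iso C u"
proof (intro ballI impI)
  note S = sesD[OF s]
  fix u assume u: "u \<in> hom C (Dom C i) (Dom C i)" and eq: "ext_class C (i, \<alpha>) = conn C (i, \<alpha>) u"
  obtain h where h: "h \<in> hom C (Cod C i) (Cod C i)" "\<alpha> \<cdot> h = \<alpha>" "h \<cdot> i = i \<cdot> u"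
    using equiv_back[OF s u eq] by blast
  have "iso C h" using rm h(1,2) S(5) unfolding right_minimal_def by auto
  then show "iso C u" using iso_from_h[OF s u h(1) _ h(2,3)] by simp
qed

lemma dir21: assumes s: "ses C (i, \<alpha>)"
  and H: "\<forall>u\<in>hom C (Dom C i) (Dom C i). ext_class C (i, \<alpha>) = conn C (i, \<alpha>) u \<longrightarrow> iso C u"
  shows "right_minimal C \<alpha>"
  unfolding right_minimal_def
proof (intro conjI ballI impI)
  note S = sesD[OF s]
  show "\<alpha> \<in> Arr C" using homD[OF S(4)] by simp
  fix h assume h0: "h \<in> hom C (Dom C \<alpha>) (Dom C \<alpha>)" and ah: "\<alpha> \<cdot> h = \<alpha>"
  have h: "h \<in> hom C (Cod C i) (Cod C i)" using h0 S(5) by simp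
  have hi: "h \<cdot> i \<in> hom C (Dom C i) (Dom C \<alpha>)" using comp_hom[OF S(3) h] S(5) by simp
  have "\<alpha> \<cdot> (h \<cdot> i) = Zero C (Dom C i) (Cod C \<alpha>)" using assoc[OF S(3) h S(4)] ah S(6) by simp
  then obtain u where u: "u \<in> hom C (Dom C i) (Dom C i)" "i \<cdot> u = h \<cdot> i" using ker_factor[OF S(1) hi] by blast
  obtain j \<beta> f where c: "conn C (i, \<alpha>) u = ext_class C (j, \<beta>)" and ss: "ses C (j, \<beta>)"
    and PO: "is_pushout C i u f j" and b: "\<beta> \<in> hom C (Cod C f) (Cod C \<alpha>)" "\<beta> \<cdot> f = \<alpha>"
    "\<beta> \<cdot> j = Zero C (Dom C i) (Cod C \<alpha>)"
    using conn_obtain[OF s u(1)] by metis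
  note D = poD[OF PO]
  have Cu: "Cod C u = Dom C i" using homD[OF u(1)] by simp
  have Xo: "Cod C i \<in> Obj C" using hom_objs[OF S(3)] by simp
  have iH': "i \<in> hom C (Cod C u) (Cod C i)" using S(3) Cu by simp
  obtain p where p: "p \<in> hom C (Cod C f) (Cod C i)" "p \<cdot> f = h" "p \<cdot> j = i"
    using po_univ[OF PO Xo h iH' u(2)[symmetric]] by blast
  have jH: "j \<in> hom C (Dom C i) (Cod C f)" using D(4) Cu by simp
  have ap: "\<alpha> \<cdot> p = \<beta>"
  proof (rule po_uniq[OF PO])
    show "\<alpha> \<cdot> p \<in> hom C (Cod C f) (Cod C \<alpha>)" "\<beta> \<in> hom C (Cod C f) (Cod C \<alpha>)" using comp_hom[OF p(1) S(4)] b(1) by simp_all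
    show "(\<alpha> \<cdot> p) \<cdot> f = \<beta> \<cdot> f" using assoc[OF D(3) p(1) S(4)] p(2) ah b(2) by simp
    show "(\<alpha> \<cdot> p) \<cdot> j = \<beta> \<cdot> j" using assoc[OF jH p(1) S(4)] p(3) S(6) b(3) by simp
  qed
  have "ext_equiv C (j, \<beta>) (i, \<alpha>)" unfolding ext_equiv_def ker_obj_def end_obj_def
    using s ss homD[OF jH] homD[OF b(1)] p(1) p(3) ap by auto
  then have "ext_class C (i, \<alpha>) = conn C (i, \<alpha>) u" using ee_class c by simp
  then have "iso C u" using H u(1) by blast
  then show "iso C h" using ses_morph_iso[OF s s h ah u(1) u(2)[symmetric]] by simp
qed

lemma dir23: assumes s: "ses C (i, \<alpha>)"
  and H: "\<forall>u\<in>hom C (Dom C i) (Dom C i). ext_class C (i, \<alpha>) = conn C (i, \<alpha>) u \<longrightarrow> iso C u"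
  shows "conn_right_minimal C (i, \<alpha>)"
  unfolding conn_right_minimal_def ker_obj_def fst_conv
proof (intro allI impI)
  note S = sesD[OF s]
  fix \<phi> assume A: "Gamma_linear_endo C (Dom C i) \<phi> \<and>
     (\<forall>w\<in>hom C (Dom C i) (Dom C i). conn C (i, \<alpha>) (\<phi> w) = conn C (i, \<alpha>) w)"
  define K where "K = Dom C i"
  have Ko: "K \<in> Obj C" using hom_objs[OF S(3)] K_def by simp
  have idH: "Ident C K \<in> hom C K K" using id_hom[OF Ko] .
  have L1: "\<forall>w\<in>hom C K K. \<phi> w \<in> hom C K K" and
    L3: "\<forall>\<gamma>\<in>hom C K K. \<forall>w\<in>hom C K K. \<phi> (\<gamma> \<cdot> w) = \<gamma> \<cdot> (\<phi> w)"
    using A K_def unfolding Gamma_linear_endo_def by auto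
  have CI: "\<forall>w\<in>hom C K K. conn C (i, \<alpha>) (\<phi> w) = conn C (i, \<alpha>) w" using A K_def by simp
  define u where "u = \<phi> (Ident C K)"
  have uH: "u \<in> hom C K K" using L1 idH u_def by simp
  have "conn C (i, \<alpha>) u = ext_class C (i, \<alpha>)" using CI idH conn_id[OF s] u_def K_def by simp
  then have "iso C u" using H uH K_def by simp
  then obtain v where v: "v \<in> hom C K K" "v \<cdot> u = Ident C K" "u \<cdot> v = Ident C K" using isoD[OF _ uH] by blast
  have phi: "\<And>w. w \<in> hom C K K \<Longrightarrow> \<phi> w = w \<cdot> u"
  proof -
    fix w assume w: "w \<in> hom C K K"
    have "\<phi> w = \<phi> (w \<cdot> Ident C K)" using id_r[OF w] by simp
    also have "\<dots> = w \<cdot> u" using L3 w idH u_def by simp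
    finally show "\<phi> w = w \<cdot> u" .
  qed
  show "bij_betw \<phi> (hom C (Dom C i) (Dom C i)) (hom C (Dom C i) (Dom C i))"
    unfolding K_def[symmetric] bij_betw_def
  proof
    show "inj_on \<phi> (hom C K K)"
    proof (rule inj_onI)
      fix w w' assume w: "w \<in> hom C K K" and w': "w' \<in> hom C K K" and e: "\<phi> w = \<phi> w'"
      have e': "w \<cdot> u = w' \<cdot> u" using e phi w w' by simp
      have "w = (w \<cdot> u) \<cdot> v" using assoc[OF v(1) uH w] v(3) id_r[OF w] by simp
      also have "\<dots> = w'" using e' assoc[OF v(1) uH w'] v(3) id_r[OF w'] by simp
      finally show "w = w'" .
    qed
    show "\<phi> ` hom C K K = hom C K K"
    proof
      show "\<phi> ` hom C K K \<subseteq> hom C K K" using L1 by blast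
      show "hom C K K \<subseteq> \<phi> ` hom C K K"
      proof
        fix w assume w: "w \<in> hom C K K"
        have wv: "w \<cdot> v \<in> hom C K K" using comp_hom[OF v(1) w] .
        have "\<phi> (w \<cdot> v) = w" using phi[OF wv] assoc[OF uH v(1) w] v(2) id_r[OF w] by simp
        then show "w \<in> \<phi> ` hom C K K" using wv by (metis image_eqI)
      qed
    qed
  qed
qed

lemma conn_shift:
  assumes s: "ses C (i, \<alpha>)" and h: "h \<in> hom C (Cod C i) (Cod C i)" and ah: "\<alpha> \<cdot> h = \<alpha>" and hi: "h \<cdot> i = i \<cdot> u"
    and u: "u \<in> hom C (Dom C i) (Dom C i)" and w: "w \<in> hom C (Dom C i) (Dom C i)"
  shows "conn C (i, \<alpha>) (w \<cdot> u) = conn C (i, \<alpha>) w"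
proof -
  note S = sesD[OF s]
  have wu: "w \<cdot> u \<in> hom C (Dom C i) (Dom C i)" using comp_hom[OF u w] .
  obtain j1 \<beta>1 f1 where c1: "conn C (i, \<alpha>) (w \<cdot> u) = ext_class C (j1, \<beta>1)" and ss1: "ses C (j1, \<beta>1)"
    and PO1: "is_pushout C i (w \<cdot> u) f1 j1" and b1: "\<beta>1 \<in> hom C (Cod C f1) (Cod C \<alpha>)" "\<beta>1 \<cdot> f1 = \<alpha>"
    "\<beta>1 \<cdot> j1 = Zero C (Dom C i) (Cod C \<alpha>)"
    using conn_obtain[OF s wu] by metis
  obtain j2 \<beta>2 f2 where c2: "conn C (i, \<alpha>) w = ext_class C (j2, \<beta>2)" and ss2: "ses C (j2, \<beta>2)"
    and PO2: "is_pushout C i w f2 j2" and b2: "\<beta>2 \<in> hom C (Cod C f2) (Cod C \<alpha>)" "\<beta>2 \<cdot> f2 = \<alpha>"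
    "\<beta>2 \<cdot> j2 = Zero C (Dom C i) (Cod C \<alpha>)"
    using conn_obtain[OF s w] by metis
  note D1 = poD[OF PO1] and D2 = poD[OF PO2]
  have Cw: "Cod C w = Dom C i" and Cwu: "Cod C (w \<cdot> u) = Dom C i" using homD[OF w] homD[OF wu] by simp_all
  have j1H: "j1 \<in> hom C (Dom C i) (Cod C f1)" using D1(4) Cwu by simp
  have j2H: "j2 \<in> hom C (Dom C i) (Cod C f2)" using D2(4) Cw by simp
  have E2o: "Cod C f2 \<in> Obj C" using hom_objs[OF j2H] by simp
  have g: "f2 \<cdot> h \<in> hom C (Cod C i) (Cod C f2)" using comp_hom[OF h D2(3)] .
  have j2H': "j2 \<in> hom C (Cod C (w \<cdot> u)) (Cod C f2)" using j2H Cwu by simp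
  have "(f2 \<cdot> h) \<cdot> i = f2 \<cdot> (i \<cdot> u)" using assoc[OF S(3) h D2(3)] hi by simp
  also have "\<dots> = (j2 \<cdot> w) \<cdot> u" using assoc[OF u S(3) D2(3)] D2(5) by simp
  also have "\<dots> = j2 \<cdot> (w \<cdot> u)" using assoc[OF u w j2H] by simp
  finally have e: "(f2 \<cdot> h) \<cdot> i = j2 \<cdot> (w \<cdot> u)" .
  obtain p where p: "p \<in> hom C (Cod C f1) (Cod C f2)" "p \<cdot> f1 = f2 \<cdot> h" "p \<cdot> j1 = j2"
    using po_univ[OF PO1 E2o g j2H' e] by blast
  have bp: "\<beta>2 \<cdot> p = \<beta>1"
  proof (rule po_uniq[OF PO1])
    show "\<beta>2 \<cdot> p \<in> hom C (Cod C f1) (Cod C \<alpha>)" "\<beta>1 \<in> hom C (Cod C f1) (Cod C \<alpha>)" using comp_hom[OF p(1) b2(1)] b1(1) by simp_all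
    show "(\<beta>2 \<cdot> p) \<cdot> f1 = \<beta>1 \<cdot> f1" using assoc[OF D1(3) p(1) b2(1)] p(2) assoc[OF h D2(3) b2(1)] b2(2) ah b1(2) by simp
    show "(\<beta>2 \<cdot> p) \<cdot> j1 = \<beta>1 \<cdot> j1" using assoc[OF j1H p(1) b2(1)] p(3) b2(3) b1(3) by simp
  qed
  have CjCf1: "Cod C j1 = Cod C f1" and CjCf2: "Cod C j2 = Cod C f2" using homD[OF j1H] homD[OF j2H] by simp_all
  have "ext_equiv C (j1, \<beta>1) (j2, \<beta>2)" unfolding ext_equiv_def ker_obj_def end_obj_def
    using ss1 ss2 homD[OF j1H] homD[OF j2H] homD[OF b1(1)] homD[OF b2(1)] p(1) p(3) bp CjCf1 CjCf2 by auto
  then show ?thesis using ee_class c1 c2 by simp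
qed

lemma dir32: assumes s: "ses C (i, \<alpha>)" and R: "conn_right_minimal C (i, \<alpha>)"
  shows "\<forall>u\<in>hom C (Dom C i) (Dom C i). ext_class C (i, \<alpha>) = conn C (i, \<alpha>) u \<longrightarrow> iso C u"
proof (intro ballI impI)
  note S = sesD[OF s]
  fix u assume u: "u \<in> hom C (Dom C i) (Dom C i)" and eq: "ext_class C (i, \<alpha>) = conn C (i, \<alpha>) u"
  define K where "K = Dom C i"
  have Ko: "K \<in> Obj C" using hom_objs[OF S(3)] K_def by simp
  have uH: "u \<in> hom C K K" using u K_def by simp
  obtain h where h: "h \<in> hom C (Cod C i) (Cod C i)" "\<alpha> \<cdot> h = \<alpha>" "h \<cdot> i = i \<cdot> u"
    using equiv_back[OF s u eq] by blast
  define \<phi> where "\<phi> = (\<lambda>w. w \<cdot> u)"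
  have GL: "Gamma_linear_endo C K \<phi>" unfolding Gamma_linear_endo_def \<phi>_def
  proof (intro conjI ballI)
    fix w assume "w \<in> hom C K K" then show "w \<cdot> u \<in> hom C K K" using uH by blast
  next
    fix w w' assume "w \<in> hom C K K" "w' \<in> hom C K K"
    then show "(w \<oplus> w') \<cdot> u = w \<cdot> u \<oplus> w' \<cdot> u" using distr[OF uH] by blast
  next
    fix \<gamma> w assume "\<gamma> \<in> hom C K K" "w \<in> hom C K K"
    then show "(\<gamma> \<cdot> w) \<cdot> u = \<gamma> \<cdot> (w \<cdot> u)" using assoc[OF uH] by simp
  qed
  have CI: "\<forall>w\<in>hom C K K. conn C (i, \<alpha>) (\<phi> w) = conn C (i, \<alpha>) w"
    using conn_shift[OF s h u] K_def \<phi>_def by simp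
  have bij: "bij_betw \<phi> (hom C K K) (hom C K K)"
    using R GL CI unfolding conn_right_minimal_def ker_obj_def fst_conv K_def by blast
  have idH: "Ident C K \<in> hom C K K" using id_hom[OF Ko] .
  then obtain v where v: "v \<in> hom C K K" "\<phi> v = Ident C K" using bij unfolding bij_betw_def by force
  have vu: "v \<cdot> u = Ident C K" using v \<phi>_def by simp
  have uv: "u \<cdot> v \<in> hom C K K" using comp_hom[OF v(1) uH] .
  have "\<phi> (u \<cdot> v) = \<phi> (Ident C K)" unfolding \<phi>_def using assoc[OF uH v(1) uH] vu id_r[OF uH] id_l[OF uH] by simp
  then have "u \<cdot> v = Ident C K" using bij uv idH unfolding bij_betw_def inj_on_def by blast
  then show "iso C u" using isoI[OF uH v(1) vu] by simp
qed

end

theorem lemma3p1: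
  fixes C :: "('o,'m) acat" and i \<alpha> :: 'm
  assumes "abelian C"
    and "ses C (i, \<alpha>)"
  shows "(right_minimal C \<alpha> \<longleftrightarrow>
            (\<forall>u\<in>hom C (Dom C i) (Dom C i).
               ext_class C (i, \<alpha>) = conn C (i, \<alpha>) u \<longrightarrow> iso C u))
       \<and> ((\<forall>u\<in>hom C (Dom C i) (Dom C i).
               ext_class C (i, \<alpha>) = conn C (i, \<alpha>) u \<longrightarrow> iso C u)
            \<longleftrightarrow> conn_right_minimal C (i, \<alpha>))"
proof -
  interpret ab C using assms(1) by unfold_locales
  show ?thesis using dir12[OF assms(2)] dir21[OF assms(2)] dir23[OF assms(2)] dir32[OF assms(2)] by blast
qed

end
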